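(* Let $\mathcal H_A=\mathcal H_B=\mathbb C^3$ and consider the nine product states $|0\rangle|0\pm1\rangle$, $|0\pm1\rangle|2\rangle$, $|2\rangle|1\pm2\rangle$, $|1\pm2\rangle|0\rangle$, $|1\rangle|1\rangle$ (first factor Alice's, second Bob's). (a) If $|\Phi\rangle\in\mathcal H_{A'}\otimes\mathcal H_{B'}$ is such that these nine states tensored with $|\Phi\rangle$ are perfectly distinguishable by one-way LOCC from Alice to Bob, then the Schmidt rank of $|\Phi\rangle$ is at least $3$ (and rank $3$ suffices). (b) There is a state $|\Phi\rangle$ of Schmidt rank $2$ (an EPR pair) such that the nine states tensored with $|\Phi\rangle$ are perfectly distinguishable by finite-round two-way LOCC.
   Context: $|a\pm b\rangle:=(|a\rangle\pm|b\rangle)/\sqrt2$ with $\{|0\rangle,|1\rangle,|2\rangle\}$ the computational basis of $\mathbb C^3$. Alice holds $\mathcal H_A\otimes\mathcal H_{A'}$ and Bob holds $\mathcal H_B\otimes\mathcal H_{B'}$. One-way LOCC distinguishability: Alice measures, sends her outcome to Bob, Bob measures depending on it, and the outcomes identify the state with certainty. Two-way LOCC: finitely many alternating rounds of local measurements with classical communication in both directions. *)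

theory Defs
  imports Complex_Main
begin

text \<open>Finite-dimensional vectors/matrices are represented by functions on natural
indices with explicit dimension bounds.  A pure bipartite state of a system with
Alice dimension dA and Bob dimension dB is represented by its coefficient matrix
psi :: nat => nat => complex, psi a b being the amplitude of basis vector |a>|b>
(a < dA, b < dB).\<close>

type_synonym cvec = "nat \<Rightarrow> complex"
type_synonym cmat = "nat \<Rightarrow> nat \<Rightarrow> complex"

definition ket :: "nat \<Rightarrow> cvec" where
  "ket i = (\<lambda>j. if j = i then 1 else 0)"

definition ket_plus :: "nat \<Rightarrow> nat \<Rightarrow> cvec" where
  "ket_plus a b = (\<lambda>j. (ket a j + ket b j) / complex_of_real (sqrt 2))"

definition ket_minus :: "nat \<Rightarrow> nat \<Rightarrow> cvec" where
  "ket_minus a b = (\<lambda>j. (ket a j - ket b j) / complex_of_real (sqrt 2))"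

definition nine_states :: "(cvec \<times> cvec) list" where
  "nine_states =
    [ (ket 0, ket_plus 0 1), (ket 0, ket_minus 0 1),
      (ket_plus 0 1, ket 2), (ket_minus 0 1, ket 2),
      (ket 2, ket_plus 1 2), (ket 2, ket_minus 1 2),
      (ket_plus 1 2, ket 0), (ket_minus 1 2, ket 0),
      (ket 1, ket 1) ]"

text \<open>|x>_A |y>_B tensored with |Phi> in H_A' x H_B' (dims dA', dB'), regarded as a
bipartite state of Alice (H_A x H_A', dimension 3*dA') versus Bob (H_B x H_B',
dimension 3*dB'), index a = i*dA' + k for |i>_A|k>_A', similarly for Bob.\<close>
definition tensor_anc :: "nat \<Rightarrow> nat \<Rightarrow> cmat \<Rightarrow> cvec \<times> cvec \<Rightarrow> cmat" where
  "tensor_anc dA' dB' Phi xy =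
     (\<lambda>a b. fst xy (a div dA') * snd xy (b div dB') * Phi (a mod dA') (b mod dB'))"

definition unit_state :: "nat \<Rightarrow> nat \<Rightarrow> cmat \<Rightarrow> bool" where
  "unit_state dA dB Phi \<longleftrightarrow> (\<Sum>a<dA. \<Sum>b<dB. (cmod (Phi a b))\<^sup>2) = 1"

text \<open>The Schmidt rank is the
number of terms of a Schmidt decomposition (which is unique; we take the least).\<close>
definition orthonormal_fam :: "nat \<Rightarrow> nat \<Rightarrow> (nat \<Rightarrow> cvec) \<Rightarrow> bool" where
  "orthonormal_fam d r u \<longleftrightarrow>
     (\<forall>s<r. \<forall>t<r. (\<Sum>k<d. cnj (u s k) * u t k) = (if s = t then 1 else 0))"

definition schmidt_decomp :: "nat \<Rightarrow> nat \<Rightarrow> cmat \<Rightarrow> nat \<Rightarrow> bool" where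
  "schmidt_decomp dA dB Phi r \<longleftrightarrow>
     (\<exists>(lam :: nat \<Rightarrow> real) u v.
        (\<forall>t<r. lam t > 0) \<and> orthonormal_fam dA r u \<and> orthonormal_fam dB r v \<and>
        (\<forall>a<dA. \<forall>b<dB. Phi a b = (\<Sum>t<r. complex_of_real (lam t) * u t a * v t b)))"

definition schmidt_rank :: "nat \<Rightarrow> nat \<Rightarrow> cmat \<Rightarrow> nat" where
  "schmidt_rank dA dB Phi = (LEAST r. schmidt_decomp dA dB Phi r)"

text \<open>A quantum instrument (measurement with post-measurement states) from dimension d
to dimension d': finitely many Kraus operators K_m (d' x d matrices) with
sum_m K_m^dagger K_m = identity.\<close>
definition kraus :: "nat \<Rightarrow> nat \<Rightarrow> cmat list \<Rightarrow> bool" where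
  "kraus d d' Ks \<longleftrightarrow>
     (\<forall>i<d. \<forall>j<d. (\<Sum>m<length Ks. \<Sum>r<d'. cnj ((Ks ! m) r i) * (Ks ! m) r j)
                  = (if i = j then 1 else 0))"

definition alice_op :: "nat \<Rightarrow> cmat \<Rightarrow> cmat \<Rightarrow> cmat" where
  "alice_op dA K psi = (\<lambda>a b. \<Sum>c<dA. K a c * psi c b)"

definition bob_op :: "nat \<Rightarrow> cmat \<Rightarrow> cmat \<Rightarrow> cmat" where
  "bob_op dB L psi = (\<lambda>a b. \<Sum>c<dB. L b c * psi a c)"

definition nonzero_state :: "nat \<Rightarrow> nat \<Rightarrow> cmat \<Rightarrow> bool" where
  "nonzero_state dA dB psi \<longleftrightarrow> (\<exists>a<dA. \<exists>b<dB. psi a b \<noteq> 0)"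

text \<open>At the end of a protocol branch the outcomes identify the state with certainty:
at most one of the candidate states has nonzero (unnormalised) post-measurement
state, i.e. nonzero probability of reaching this branch.\<close>
definition identified :: "nat \<Rightarrow> nat \<Rightarrow> cmat list \<Rightarrow> bool" where
  "identified dA dB S \<longleftrightarrow>
     (\<forall>k<length S. \<forall>l<length S. nonzero_state dA dB (S ! k) \<and> nonzero_state dA dB (S ! l)
        \<longrightarrow> k = l)"

text \<open>Perfect discrimination by LOCC with at most n rounds: in each round one party
performs a local instrument (possibly changing the local dimension, e.g. by adding
ancillas), announces the outcome, and the protocol continues depending on all
outcomes so far.\<close>
fun locc_dist :: "nat \<Rightarrow> nat \<Rightarrow> nat \<Rightarrow> cmat list \<Rightarrow> bool" where
  "locc_dist 0 dA dB S = identified dA dB S"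
| "locc_dist (Suc n) dA dB S =
     (locc_dist n dA dB S \<or>
      (\<exists>dA' Ks. kraus dA dA' Ks \<and>
         (\<forall>m<length Ks. locc_dist n dA' dB (map (alice_op dA (Ks ! m)) S))) \<or>
      (\<exists>dB' Ls. kraus dB dB' Ls \<and>
         (\<forall>m<length Ls. locc_dist n dA dB' (map (bob_op dB (Ls ! m)) S))))"

definition two_way_locc_dist :: "nat \<Rightarrow> nat \<Rightarrow> cmat list \<Rightarrow> bool" where
  "two_way_locc_dist dA dB S \<longleftrightarrow> (\<exists>n. locc_dist n dA dB S)"

definition one_way_locc_dist :: "nat \<Rightarrow> nat \<Rightarrow> cmat list \<Rightarrow> bool" where
  "one_way_locc_dist dA dB S \<longleftrightarrow>
     (\<exists>dA' Ks. kraus dA dA' Ks \<and>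
        (\<forall>m<length Ks. \<exists>dB' Ls. kraus dB dB' Ls \<and>
           (\<forall>n<length Ls.
              identified dA' dB' (map (bob_op dB (Ls ! n) \<circ> alice_op dA (Ks ! m)) S))))"

definition nine_with :: "nat \<Rightarrow> nat \<Rightarrow> cmat \<Rightarrow> cmat list" where
  "nine_with dA' dB' Phi = map (tensor_anc dA' dB' Phi) nine_states"

end

theory Submission
  imports Defs "HOL-Analysis.Analysis"
begin


definition ip :: "nat \<Rightarrow> cvec \<Rightarrow> cvec \<Rightarrow> complex" where
  "ip d x y = (\<Sum>k<d. cnj (x k) * y k)"

definition nrm2 :: "nat \<Rightarrow> cvec \<Rightarrow> real" where
  "nrm2 d x = (\<Sum>k<d. (cmod (x k))\<^sup>2)"

lemma ip_cnj: "cnj (ip d x y) = ip d y x"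
  by (simp add: ip_def mult.commute)

lemma cnj_mult_self: "cnj z * z = complex_of_real ((cmod z)\<^sup>2)"
  by (metis complex_norm_square mult.commute of_real_power)

lemma ip_self: "ip d x x = complex_of_real (nrm2 d x)"
  by (simp add: ip_def nrm2_def cnj_mult_self)

lemma nrm2_nonneg: "nrm2 d x \<ge> 0"
  by (simp add: nrm2_def sum_nonneg)

lemma ip_sum_right: "ip d x (\<lambda>k. \<Sum>t<r. c t * u t k) = (\<Sum>t<r. c t * ip d x (u t))"
proof -
  have "ip d x (\<lambda>k. \<Sum>t<r. c t * u t k) = (\<Sum>k<d. \<Sum>t<r. c t * (cnj (x k) * u t k))"
    by (simp add: ip_def sum_distrib_left mult_ac)
  also have "\<dots> = (\<Sum>t<r. \<Sum>k<d. c t * (cnj (x k) * u t k))" by (rule sum.swap)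
  also have "\<dots> = (\<Sum>t<r. c t * ip d x (u t))" by (simp add: ip_def sum_distrib_left)
  finally show ?thesis .
qed

lemma ip_sum_left: "ip d (\<lambda>k. \<Sum>t<r. c t * u t k) y = (\<Sum>t<r. cnj (c t) * ip d (u t) y)"
proof -
  have "ip d (\<lambda>k. \<Sum>t<r. c t * u t k) y = cnj (ip d y (\<lambda>k. \<Sum>t<r. c t * u t k))"
    by (simp add: ip_cnj)
  also have "\<dots> = (\<Sum>t<r. cnj (c t) * ip d (u t) y)"
    by (simp add: ip_sum_right ip_cnj)
  finally show ?thesis .
qed

lemma ip_diff_left: "ip d (\<lambda>k. x k - y k) z = ip d x z - ip d y z"
  by (simp add: ip_def algebra_simps sum_subtractf)
lemma ip_diff_right: "ip d z (\<lambda>k. x k - y k) = ip d z x - ip d z y"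
  by (simp add: ip_def algebra_simps sum_subtractf)
lemma ip_add_left: "ip d (\<lambda>k. x k + y k) z = ip d x z + ip d y z"
  by (simp add: ip_def algebra_simps sum.distrib)
lemma ip_add_right: "ip d z (\<lambda>k. x k + y k) = ip d z x + ip d z y"
  by (simp add: ip_def algebra_simps sum.distrib)
lemma ip_scale_left: "ip d (\<lambda>k. c * x k) z = cnj c * ip d x z"
  by (simp add: ip_def algebra_simps sum_distrib_left)
lemma ip_scale_right: "ip d z (\<lambda>k. c * x k) = c * ip d z x"
  by (simp add: ip_def algebra_simps sum_distrib_left)

lemma orthonormal_famD: "orthonormal_fam d r u \<Longrightarrow> s < r \<Longrightarrow> t < r \<Longrightarrow>
   ip d (u s) (u t) = (if s = t then 1 else 0)"
  by (simp add: orthonormal_fam_def ip_def)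

lemma sum_delta_left: "s < (r::nat) \<Longrightarrow> (\<Sum>t<r. c t * (if s = t then 1 else 0)) = (c s :: complex)"
proof -
  assume s: "s < r"
  have "(\<Sum>t<r. c t * (if s = t then 1 else 0)) = (\<Sum>t\<in>{..<r}. if s = t then c t else 0)"
    by (rule sum.cong) auto
  also have "\<dots> = c s" using s sum.delta'[of "{..<r}" s c] by simp
  finally show ?thesis .
qed

lemma bessel:
  assumes on: "orthonormal_fam d r u"
  shows "(\<Sum>t<r. (cmod (ip d (u t) x))\<^sup>2) \<le> nrm2 d x"
proof -
  define c where "c t = ip d (u t) x" for t
  define y where "y k = (\<Sum>t<r. c t * u t k)" for k
  have yy: "ip d y y = (\<Sum>s<r. cnj (c s) * c s)"
  proof -
    have "ip d y y = (\<Sum>s<r. cnj (c s) * ip d (u s) y)"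
      unfolding y_def by (rule ip_sum_left)
    also have "\<dots> = (\<Sum>s<r. cnj (c s) * (\<Sum>t<r. c t * (if s = t then 1 else 0)))"
      unfolding y_def ip_sum_right
      by (intro sum.cong refl) (simp add: orthonormal_famD[OF on])
    also have "\<dots> = (\<Sum>s<r. cnj (c s) * c s)"
      by (intro sum.cong refl) (simp add: sum_delta_left)
    finally show ?thesis .
  qed
  have yx: "ip d y x = (\<Sum>s<r. cnj (c s) * c s)"
    unfolding y_def ip_sum_left c_def by simp
  have xy: "ip d x y = (\<Sum>s<r. cnj (c s) * c s)"
  proof -
    have "ip d x y = cnj (ip d y x)" by (simp add: ip_cnj)
    also have "\<dots> = (\<Sum>s<r. cnj (c s) * c s)" by (simp add: yx mult.commute)
    finally show ?thesis .
  qed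
  have S: "(\<Sum>s<r. cnj (c s) * c s) = complex_of_real (\<Sum>t<r. (cmod (c t))\<^sup>2)"
    by (simp add: cnj_mult_self)
  have "ip d (\<lambda>k. x k - y k) (\<lambda>k. x k - y k) = ip d x x - ip d x y - (ip d y x - ip d y y)"
    by (simp add: ip_diff_left ip_diff_right)
  also have "\<dots> = complex_of_real (nrm2 d x - (\<Sum>t<r. (cmod (c t))\<^sup>2))"
    by (simp only: xy yx yy S ip_self[of d x] of_real_diff) simp
  finally have "complex_of_real (nrm2 d (\<lambda>k. x k - y k)) = complex_of_real (nrm2 d x - (\<Sum>t<r. (cmod (c t))\<^sup>2))"
    by (simp add: ip_self)
  hence "nrm2 d (\<lambda>k. x k - y k) = nrm2 d x - (\<Sum>t<r. (cmod (c t))\<^sup>2)"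
    using of_real_eq_iff by blast
  with nrm2_nonneg[of d "\<lambda>k. x k - y k"] show ?thesis unfolding c_def by linarith
qed

lemma orthonormal_le_dim:
  assumes on: "orthonormal_fam d r u"
  shows "r \<le> d"
proof -
  have "real r = (\<Sum>t<r. nrm2 d (u t))"
  proof -
    have "\<And>t. t < r \<Longrightarrow> nrm2 d (u t) = 1"
    proof -
      fix t assume t: "t < r"
      have "complex_of_real (nrm2 d (u t)) = 1"
        using orthonormal_famD[OF on t t] by (simp add: ip_self)
      thus "nrm2 d (u t) = 1" using of_real_eq_1_iff by blast
    qed
    thus ?thesis by simp
  qed
  also have "\<dots> = (\<Sum>k<d. \<Sum>t<r. (cmod (u t k))\<^sup>2)"
    unfolding nrm2_def by (rule sum.swap)
  also have "\<dots> \<le> (\<Sum>k<d. 1)"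
  proof (rule sum_mono)
    fix k assume k: "k \<in> {..<d}"
    have "\<And>t. ip d (u t) (ket k) = cnj (u t k)"
      using k by (simp add: ip_def ket_def if_distrib cong: if_cong)
    moreover have "nrm2 d (ket k) = 1"
    proof -
      have "nrm2 d (ket k) = (\<Sum>j\<in>{..<d}. if j = k then 1 else 0)"
        unfolding nrm2_def by (rule sum.cong) (auto simp: ket_def)
      also have "\<dots> = 1" using k by (simp add: sum.delta)
      finally show ?thesis .
    qed
    ultimately show "(\<Sum>t<r. (cmod (u t k))\<^sup>2) \<le> 1"
      using bessel[OF on, of "ket k"] by simp
  qed
  finally show ?thesis by simp
qed


definition mv :: "nat \<Rightarrow> cmat \<Rightarrow> cvec \<Rightarrow> cvec" where
  "mv dB Phi x = (\<lambda>a. \<Sum>b<dB. Phi a b * x b)"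

definition fval :: "nat \<Rightarrow> nat \<Rightarrow> cmat \<Rightarrow> cvec \<Rightarrow> real" where
  "fval dA dB Phi x = nrm2 dA (mv dB Phi x)"

lemma mv_lin: "mv dB Phi (\<lambda>k. x k + c * y k) a = mv dB Phi x a + c * mv dB Phi y a"
  by (simp add: mv_def algebra_simps sum.distrib sum_distrib_left)

lemma mv_diff: "mv dB Phi (\<lambda>k. x k - y k) a = mv dB Phi x a - mv dB Phi y a"
  by (simp add: mv_def algebra_simps sum_subtractf)

lemma mv_scale: "mv dB Phi (\<lambda>k. c * y k) a = c * mv dB Phi y a"
  by (simp add: mv_def algebra_simps sum_distrib_left)

lemma mv_sum: "mv dB Phi (\<lambda>k. \<Sum>s<r. c s * w s k) a = (\<Sum>s<r. c s * mv dB Phi (w s) a)"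
proof -
  have "mv dB Phi (\<lambda>k. \<Sum>s<r. c s * w s k) a = (\<Sum>b<dB. \<Sum>s<r. c s * (Phi a b * w s b))"
    by (simp add: mv_def sum_distrib_left mult_ac)
  also have "\<dots> = (\<Sum>s<r. \<Sum>b<dB. c s * (Phi a b * w s b))" by (rule sum.swap)
  finally show ?thesis by (simp add: mv_def sum_distrib_left)
qed

lemma mv_trunc: "(\<And>b. b < dB \<Longrightarrow> x b = y b) \<Longrightarrow> mv dB Phi x = mv dB Phi y"
  by (simp add: mv_def)
lemma ip_trunc: "(\<And>b. b < d \<Longrightarrow> x b = y b) \<Longrightarrow> ip d z x = ip d z y"
  by (simp add: ip_def)
lemma nrm2_trunc: "(\<And>b. b < d \<Longrightarrow> x b = y b) \<Longrightarrow> nrm2 d x = nrm2 d y"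
  by (simp add: nrm2_def)

lemma nrm2_expand:
  "nrm2 d (\<lambda>k. x k + complex_of_real t * y k) = nrm2 d x + 2 * t * Re (ip d x y) + t\<^sup>2 * nrm2 d y"
proof -
  have "complex_of_real (nrm2 d (\<lambda>k. x k + complex_of_real t * y k))
     = ip d (\<lambda>k. x k + complex_of_real t * y k) (\<lambda>k. x k + complex_of_real t * y k)"
    by (simp add: ip_self)
  also have "\<dots> = ip d x x + of_real t * ip d x y + of_real t * ip d y x + of_real t * of_real t * ip d y y"
    by (simp add: ip_add_left ip_add_right ip_scale_left ip_scale_right algebra_simps)
  also have "\<dots> = of_real (nrm2 d x + 2 * t * Re (ip d x y) + t\<^sup>2 * nrm2 d y)"
  proof -
    have "ip d x y + ip d y x = of_real (2 * Re (ip d x y))"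
      by (metis complex_add_cnj ip_cnj)
    hence "of_real t * ip d x y + of_real t * ip d y x = of_real t * of_real (2 * Re (ip d x y))"
      by (metis distrib_left)
    thus ?thesis by (simp add: ip_self power2_eq_square algebra_simps)
  qed
  finally show ?thesis using of_real_eq_iff by blast
qed

lemma nrm2_zero_iff: "nrm2 d x = 0 \<longleftrightarrow> (\<forall>k<d. x k = 0)"
  by (auto simp: nrm2_def sum_nonneg_eq_0_iff)

lemma nrm2_scale: "nrm2 d (\<lambda>k. c * x k) = (cmod c)\<^sup>2 * nrm2 d x"
  by (simp add: nrm2_def norm_mult power_mult_distrib sum_distrib_left)

lemma fval_scale: "fval dA dB Phi (\<lambda>k. c * x k) = (cmod c)\<^sup>2 * fval dA dB Phi x"
proof -
  have "mv dB Phi (\<lambda>k. c * x k) = (\<lambda>a. c * mv dB Phi x a)"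
    using mv_scale by blast
  thus ?thesis by (simp add: fval_def nrm2_scale)
qed

lemma fval_expand:
  "fval dA dB Phi (\<lambda>k. x k + complex_of_real t * y k) =
     fval dA dB Phi x + 2 * t * Re (ip dA (mv dB Phi x) (mv dB Phi y)) + t\<^sup>2 * fval dA dB Phi y"
proof -
  have "mv dB Phi (\<lambda>k. x k + complex_of_real t * y k) = (\<lambda>a. mv dB Phi x a + complex_of_real t * mv dB Phi y a)"
    using mv_lin by blast
  thus ?thesis by (simp add: fval_def nrm2_expand)
qed

lemma quad_le0:
  fixes al be :: real
  assumes "\<And>t. 2 * t * al + t\<^sup>2 * be \<le> 0"
  shows "al = 0"
proof (rule ccontr)
  assume ne: "al \<noteq> 0"
  define t where "t = al / (\<bar>be\<bar> + 1)"
  have pos: "\<bar>be\<bar> + 1 > 0" by simp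
  have "t * al > 0" using ne pos unfolding t_def
    by (simp add: zero_less_mult_iff zero_less_divide_iff) (metis linorder_neqE_linordered_idom)
  have "\<bar>t\<bar> * \<bar>be\<bar> < \<bar>al\<bar>"
  proof -
    have "\<bar>t\<bar> = \<bar>al\<bar> / (\<bar>be\<bar> + 1)" unfolding t_def by simp
    hence "\<bar>t\<bar> * \<bar>be\<bar> = \<bar>al\<bar> * (\<bar>be\<bar> / (\<bar>be\<bar> + 1))" by simp
    also have "\<dots> < \<bar>al\<bar>"
    proof -
      have "\<bar>al\<bar> * \<bar>be\<bar> < \<bar>al\<bar> * (\<bar>be\<bar> + 1)" using ne by (simp add: algebra_simps)
      thus ?thesis using pos by (simp add: pos_divide_less_eq)
    qed
    finally show ?thesis .
  qed
  moreover have "\<bar>t\<bar> > 0" using \<open>t * al > 0\<close> by (cases "t = 0") auto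
  moreover have "t\<^sup>2 * \<bar>be\<bar> = \<bar>t\<bar> * (\<bar>t\<bar> * \<bar>be\<bar>)"
    by (simp add: power2_eq_square mult.assoc[symmetric] abs_mult_self_eq)
  ultimately have "t\<^sup>2 * \<bar>be\<bar> < \<bar>t\<bar> * \<bar>al\<bar>"
    by (metis mult_strict_left_mono)
  moreover have "\<bar>t\<bar> * \<bar>al\<bar> = t * al" using \<open>t * al > 0\<close> by (simp add: abs_mult[symmetric])
  moreover have "t\<^sup>2 * be \<ge> - (t\<^sup>2 * \<bar>be\<bar>)"
    using mult_left_mono[of "- \<bar>be\<bar>" be "t\<^sup>2"] by simp
  ultimately have "2 * t * al + t\<^sup>2 * be > 0" using \<open>t * al > 0\<close> by linarith
  with assms[of t] show False by linarith
qed


definition Inv :: "nat \<Rightarrow> nat \<Rightarrow> cmat \<Rightarrow> nat \<Rightarrow> (nat \<Rightarrow> cvec) \<Rightarrow> bool" where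
  "Inv dA dB Phi k w \<longleftrightarrow> orthonormal_fam dB k w \<and>
     (\<forall>s<k. \<forall>x. ip dB (w s) x = 0 \<longrightarrow> ip dA (mv dB Phi (w s)) (mv dB Phi x) = 0) \<and>
     (\<forall>s<k. fval dA dB Phi (w s) > 0)"

lemma orthonormal_fam_ip: "orthonormal_fam d r u \<longleftrightarrow> (\<forall>s<r. \<forall>t<r. ip d (u s) (u t) = (if s = t then 1 else 0))"
  by (simp add: orthonormal_fam_def ip_def)

lemma ip_ket: "b < d \<Longrightarrow> ip d z (ket b) = cnj (z b)"
proof -
  assume b: "b < d"
  have "ip d z (ket b) = (\<Sum>k\<in>{..<d}. if k = b then cnj (z b) else 0)"
    unfolding ip_def by (rule sum.cong) (auto simp: ket_def)
  also have "\<dots> = cnj (z b)" using b by simp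
  finally show ?thesis .
qed

lemma mv_ket: "b < dB \<Longrightarrow> mv dB Phi (ket b) a = Phi a b"
proof -
  assume b: "b < dB"
  have "mv dB Phi (ket b) a = (\<Sum>k\<in>{..<dB}. if k = b then Phi a b else 0)"
    unfolding mv_def by (rule sum.cong) (auto simp: ket_def)
  also have "\<dots> = Phi a b" using b by simp
  finally show ?thesis .
qed

lemma fval_ip: "complex_of_real (fval dA dB Phi x) = ip dA (mv dB Phi x) (mv dB Phi x)"
  by (simp add: fval_def ip_self)

lemma finish:
  assumes inv: "Inv dA dB Phi k w"
    and ker: "\<And>x. (\<forall>s<k. ip dB (w s) x = 0) \<Longrightarrow> (\<forall>a<dA. mv dB Phi x a = 0)"
  shows "schmidt_decomp dA dB Phi k"
proof -
  have on: "orthonormal_fam dB k w"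
    and orth: "\<And>s x. s < k \<Longrightarrow> ip dB (w s) x = 0 \<Longrightarrow> ip dA (mv dB Phi (w s)) (mv dB Phi x) = 0"
    and pos: "\<And>s. s < k \<Longrightarrow> fval dA dB Phi (w s) > 0"
    using inv unfolding Inv_def by auto
  define sg where "sg s = sqrt (fval dA dB Phi (w s))" for s
  define u where "u s a = complex_of_real (1 / sg s) * mv dB Phi (w s) a" for s a
  define v where "v s b = cnj (w s b)" for s b
  have sgpos: "\<And>s. s < k \<Longrightarrow> sg s > 0" using pos unfolding sg_def by simp
  have ou: "orthonormal_fam dA k u"
    unfolding orthonormal_fam_ip
  proof (intro allI impI)
    fix s t assume s: "s < k" and t: "t < k"
    have "ip dA (u s) (u t) = complex_of_real (1 / sg s) * complex_of_real (1 / sg t) *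
            ip dA (mv dB Phi (w s)) (mv dB Phi (w t))"
      unfolding u_def ip_def sum_distrib_left by (intro sum.cong refl) (simp add: field_simps)
    also have "\<dots> = (if s = t then 1 else 0)"
    proof (cases "s = t")
      case True
      have "ip dA (mv dB Phi (w s)) (mv dB Phi (w t)) = complex_of_real (sg s * sg s)"
        using True fval_ip[of dA dB Phi "w s"] pos[OF s] unfolding sg_def by simp
      with True sgpos[OF s] show ?thesis by (simp del: of_real_mult add: of_real_mult[symmetric])
    next
      case False
      have "ip dB (w s) (w t) = 0" using orthonormal_famD[OF on s t] False by simp
      with orth[OF s] False show ?thesis by simp
    qed
    finally show "ip dA (u s) (u t) = (if s = t then 1 else 0)" .
  qed
  have ov: "orthonormal_fam dB k v"
    unfolding orthonormal_fam_def v_def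
  proof (intro allI impI)
    fix s t assume s: "s < k" and t: "t < k"
    have "(\<Sum>k<dB. cnj (cnj (w s k)) * cnj (w t k)) = ip dB (w t) (w s)"
      by (simp add: ip_def mult.commute)
    also have "\<dots> = (if s = t then 1 else 0)" using orthonormal_famD[OF on t s] by simp
    finally show "(\<Sum>k<dB. cnj (cnj (w s k)) * cnj (w t k)) = (if s = t then 1 else 0)" .
  qed
  have dec: "\<forall>a<dA. \<forall>b<dB. Phi a b = (\<Sum>t<k. complex_of_real (sg t) * u t a * v t b)"
  proof (intro allI impI)
    fix a b assume a: "a < dA" and b: "b < dB"
    define x where "x j = ket b j - (\<Sum>s<k. cnj (w s b) * w s j)" for j
    have "\<forall>s<k. ip dB (w s) x = 0"
    proof (intro allI impI)
      fix s assume s: "s < k"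
      have "ip dB (w s) x = cnj (w s b) - (\<Sum>t<k. cnj (w t b) * ip dB (w s) (w t))"
        unfolding x_def using b by (simp add: ip_diff_right ip_sum_right ip_ket)
      also have "(\<Sum>t<k. cnj (w t b) * ip dB (w s) (w t)) = (\<Sum>t<k. cnj (w t b) * (if s = t then 1 else 0))"
        by (intro sum.cong refl) (simp add: orthonormal_famD[OF on s])
      also have "\<dots> = cnj (w s b)" using s by (rule sum_delta_left)
      finally show "ip dB (w s) x = 0" by simp
    qed
    hence "mv dB Phi x a = 0" using ker a by blast
    moreover have "mv dB Phi x a = Phi a b - (\<Sum>s<k. cnj (w s b) * mv dB Phi (w s) a)"
      unfolding x_def using b by (simp add: mv_diff mv_sum mv_ket)
    ultimately have "Phi a b = (\<Sum>s<k. cnj (w s b) * mv dB Phi (w s) a)" by simp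
    also have "\<dots> = (\<Sum>t<k. complex_of_real (sg t) * u t a * v t b)"
    proof (intro sum.cong refl)
      fix t assume "t \<in> {..<k}"
      hence "sg t > 0" using sgpos by simp
      thus "cnj (w t b) * mv dB Phi (w t) a = complex_of_real (sg t) * u t a * v t b"
        unfolding u_def v_def by (simp add: field_simps)
    qed
    finally show "Phi a b = (\<Sum>t<k. complex_of_real (sg t) * u t a * v t b)" .
  qed
  show ?thesis unfolding schmidt_decomp_def
    using sgpos ou ov dec by blast
qed


lemma diag_subseq:
  fixes X :: "nat \<Rightarrow> nat \<Rightarrow> complex"
  assumes bd: "\<And>n j. cmod (X n j) \<le> 1"
  shows "\<exists>\<sigma>. strict_mono \<sigma> \<and> (\<forall>j<d. convergent (\<lambda>n. X (\<sigma> n) j))"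
proof (induction d)
  case 0
  show ?case by (rule exI[of _ id]) (simp add: strict_mono_def)
next
  case (Suc d)
  then obtain \<sigma> where sm: "strict_mono \<sigma>" and cv: "\<forall>j<d. convergent (\<lambda>n. X (\<sigma> n) j)" by blast
  have "bounded (range (\<lambda>n. X (\<sigma> n) d))"
    unfolding bounded_iff using bd by blast
  then obtain l \<tau> where st: "strict_mono \<tau>" and lim: "((\<lambda>n. X (\<sigma> n) d) \<circ> \<tau>) \<longlonglongrightarrow> l"
    using bounded_imp_convergent_subsequence by blast
  have "strict_mono (\<sigma> \<circ> \<tau>)" using sm st by (rule strict_mono_o)
  moreover have "\<forall>j<Suc d. convergent (\<lambda>n. X ((\<sigma> \<circ> \<tau>) n) j)"
  proof (intro allI impI)
    fix j assume j: "j < Suc d"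
    show "convergent (\<lambda>n. X ((\<sigma> \<circ> \<tau>) n) j)"
    proof (cases "j = d")
      case True
      with lim show ?thesis unfolding convergent_def by (auto simp: o_def)
    next
      case False
      with j cv have "convergent (\<lambda>n. X (\<sigma> n) j)" by simp
      then obtain L where "(\<lambda>n. X (\<sigma> n) j) \<longlonglongrightarrow> L" unfolding convergent_def by blast
      from LIMSEQ_subseq_LIMSEQ[OF this st] show ?thesis unfolding convergent_def by (auto simp: o_def)
    qed
  qed
  ultimately show ?case by blast
qed

lemma cmod_le_nrm2: "j < d \<Longrightarrow> (cmod (x j))\<^sup>2 \<le> nrm2 d x"
  unfolding nrm2_def by (rule member_le_sum) auto

lemma mv_bound: "cmod (mv dB Phi x a) \<le> (\<Sum>b<dB. cmod (Phi a b)) * (if (\<forall>b<dB. cmod (x b) \<le> 1) then 1 else 1) \<or> \<not> (\<forall>b<dB. cmod (x b) \<le> 1)"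
proof (cases "\<forall>b<dB. cmod (x b) \<le> 1")
  case True
  have "cmod (mv dB Phi x a) \<le> (\<Sum>b<dB. cmod (Phi a b * x b))" unfolding mv_def by (rule norm_sum)
  also have "\<dots> \<le> (\<Sum>b<dB. cmod (Phi a b))"
  proof (rule sum_mono)
    fix b assume "b \<in> {..<dB}"
    hence "cmod (x b) \<le> 1" using True by simp
    thus "cmod (Phi a b * x b) \<le> cmod (Phi a b)" by (simp add: norm_mult mult_left_le)
  qed
  finally show ?thesis by simp
qed simp

lemma step:
  assumes inv: "Inv dA dB Phi k w"
    and x0: "\<forall>s<k. ip dB (w s) x0 = 0" and a0: "a0 < dA" and nz: "mv dB Phi x0 a0 \<noteq> 0"
  shows "\<exists>z. Inv dA dB Phi (Suc k) (w(k:=z))"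
proof -
  have on: "orthonormal_fam dB k w"
    and orth: "\<And>s x. s < k \<Longrightarrow> ip dB (w s) x = 0 \<Longrightarrow> ip dA (mv dB Phi (w s)) (mv dB Phi x) = 0"
    and pos: "\<And>s. s < k \<Longrightarrow> fval dA dB Phi (w s) > 0"
    using inv unfolding Inv_def by auto
  define F where "F = fval dA dB Phi"
  define T where "T = {x. (\<forall>j. j \<ge> dB \<longrightarrow> x j = 0) \<and> nrm2 dB x = 1 \<and> (\<forall>s<k. ip dB (w s) x = 0)}"
  have Tbd: "\<And>x j. x \<in> T \<Longrightarrow> cmod (x j) \<le> 1"
  proof -
    fix x j assume x: "x \<in> T"
    show "cmod (x j) \<le> 1"
    proof (cases "j < dB")
      case True
      hence "(cmod (x j))\<^sup>2 \<le> 1" using cmod_le_nrm2[OF True, of x] x unfolding T_def by simp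
      thus ?thesis by (simp add: power_le_one_iff)
    next
      case False thus ?thesis using x unfolding T_def by simp
    qed
  qed
  define B where "B = (\<Sum>a<dA. (\<Sum>b<dB. cmod (Phi a b))\<^sup>2)"
  have Fbd: "\<And>x. x \<in> T \<Longrightarrow> F x \<le> B"
  proof -
    fix x assume x: "x \<in> T"
    show "F x \<le> B" unfolding F_def fval_def nrm2_def B_def
    proof (rule sum_mono)
      fix a assume "a \<in> {..<dA}"
      have "cmod (mv dB Phi x a) \<le> (\<Sum>b<dB. cmod (Phi a b))"
        using mv_bound[of dB Phi x a] Tbd[OF x] by auto
      thus "(cmod (mv dB Phi x a))\<^sup>2 \<le> (\<Sum>b<dB. cmod (Phi a b))\<^sup>2"
        by (simp add: power_mono)
    qed
  qed
  have Fpos_iff: "\<And>x. F x > 0 \<longleftrightarrow> (\<exists>a<dA. mv dB Phi x a \<noteq> 0)"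
  proof -
    fix x
    have "F x \<ge> 0" unfolding F_def fval_def by (rule nrm2_nonneg)
    moreover have "F x = 0 \<longleftrightarrow> (\<forall>a<dA. mv dB Phi x a = 0)"
      unfolding F_def fval_def by (rule nrm2_zero_iff)
    ultimately show "F x > 0 \<longleftrightarrow> (\<exists>a<dA. mv dB Phi x a \<noteq> 0)" by auto
  qed
  have norm_in_T: "\<And>x. (\<forall>s<k. ip dB (w s) x = 0) \<Longrightarrow> nrm2 dB x > 0 \<Longrightarrow>
      (\<lambda>j. complex_of_real (1 / sqrt (nrm2 dB x)) * (if j < dB then x j else 0)) \<in> T \<and>
      F (\<lambda>j. complex_of_real (1 / sqrt (nrm2 dB x)) * (if j < dB then x j else 0)) = F x / nrm2 dB x"
  proof -
    fix x assume o: "\<forall>s<k. ip dB (w s) x = 0" and p: "nrm2 dB x > 0"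
    define x' where "x' j = (if j < dB then x j else 0)" for j
    define c where "c = 1 / sqrt (nrm2 dB x)"
    have c2: "(cmod (complex_of_real c))\<^sup>2 = 1 / nrm2 dB x" using p unfolding c_def
      by (simp add: norm_divide power_divide abs_of_nonneg)
    have cc: "c\<^sup>2 = 1 / nrm2 dB x" using p unfolding c_def by (simp add: power_divide)
    have n': "nrm2 dB x' = nrm2 dB x" by (rule nrm2_trunc) (simp add: x'_def)
    have "nrm2 dB (\<lambda>j. complex_of_real c * x' j) = 1"
      using p by (simp add: nrm2_scale n' cc)
    moreover have "\<forall>s<k. ip dB (w s) (\<lambda>j. complex_of_real c * x' j) = 0"
    proof (intro allI impI)
      fix s assume "s < k"
      hence "ip dB (w s) x' = 0" using o by (simp add: ip_trunc[of dB x' x] x'_def)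
      thus "ip dB (w s) (\<lambda>j. complex_of_real c * x' j) = 0" by (simp add: ip_scale_right)
    qed
    moreover have "F (\<lambda>j. complex_of_real c * x' j) = F x / nrm2 dB x"
    proof -
      have "F x' = F x" unfolding F_def fval_def by (simp add: mv_trunc[of dB x' x] x'_def)
      thus ?thesis unfolding F_def by (simp add: fval_scale cc)
    qed
    ultimately show "?thesis x" unfolding T_def x'_def c_def by auto
  qed
  have "nrm2 dB x0 > 0"
  proof (rule ccontr)
    assume "\<not> nrm2 dB x0 > 0"
    hence "nrm2 dB x0 = 0" using nrm2_nonneg[of dB x0] by linarith
    hence "\<forall>b<dB. x0 b = 0" by (simp add: nrm2_zero_iff)
    hence "mv dB Phi x0 a0 = 0" by (simp add: mv_def)
    with nz show False by simp
  qed
  with norm_in_T[OF x0] obtain x1 where x1T: "x1 \<in> T" and Fx1: "F x1 = F x0 / nrm2 dB x0" by blast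
  have "F x0 > 0" using Fpos_iff a0 nz by blast
  hence Fx1pos: "F x1 > 0" using Fx1 \<open>nrm2 dB x0 > 0\<close> by simp
  define M where "M = Sup (F ` T)"
  have bdd: "bdd_above (F ` T)" using Fbd by (meson bdd_above.I2)
  have Tne: "F ` T \<noteq> {}" using x1T by blast
  have Mup: "\<And>x. x \<in> T \<Longrightarrow> F x \<le> M" unfolding M_def using bdd by (auto intro: cSup_upper)
  have Mpos: "M > 0" using Mup[OF x1T] Fx1pos by linarith
  have "\<forall>n. \<exists>x\<in>T. M - inverse (real (Suc n)) < F x"
  proof
    fix n
    have "M - inverse (real (Suc n)) < Sup (F ` T)" unfolding M_def by simp
    thus "\<exists>x\<in>T. M - inverse (real (Suc n)) < F x"
      using less_cSup_iff[OF Tne bdd] by auto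
  qed
  then obtain X where XT: "\<And>n. X n \<in> T" and Xlow: "\<And>n. M - inverse (real (Suc n)) < F (X n)"
    by metis
  have FX: "(\<lambda>n. F (X n)) \<longlonglongrightarrow> M"
  proof (rule tendsto_sandwich[of "\<lambda>n. M - inverse (real (Suc n))" _ _ "\<lambda>n. M"])
    show "\<forall>\<^sub>F n in sequentially. M - inverse (real (Suc n)) \<le> F (X n)"
      using Xlow by (simp add: less_imp_le)
    show "\<forall>\<^sub>F n in sequentially. F (X n) \<le> M" using Mup XT by simp
    show "(\<lambda>n. M - inverse (real (Suc n))) \<longlonglongrightarrow> M"
      using tendsto_diff[OF tendsto_const LIMSEQ_inverse_real_of_nat] by simp
    show "(\<lambda>n. M) \<longlonglongrightarrow> M" by simp
  qed
  obtain \<sigma> where sm: "strict_mono \<sigma>" and cv: "\<forall>j<dB. convergent (\<lambda>n. X (\<sigma> n) j)"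
    using diag_subseq[of X dB] Tbd XT by blast
  define z where "z j = (if j < dB then lim (\<lambda>n. X (\<sigma> n) j) else 0)" for j
  have conv: "\<And>j. (\<lambda>n. X (\<sigma> n) j) \<longlonglongrightarrow> z j"
  proof -
    fix j show "(\<lambda>n. X (\<sigma> n) j) \<longlonglongrightarrow> z j"
    proof (cases "j < dB")
      case True thus ?thesis using cv by (simp add: z_def convergent_LIMSEQ_iff)
    next
      case False
      hence "\<And>n. X (\<sigma> n) j = 0" using XT unfolding T_def by simp
      thus ?thesis using False by (simp add: z_def)
    qed
  qed
  have l1: "(\<lambda>n. nrm2 dB (X (\<sigma> n))) \<longlonglongrightarrow> nrm2 dB z"
    unfolding nrm2_def by (intro tendsto_intros conv)
  moreover have "(\<lambda>n. nrm2 dB (X (\<sigma> n))) = (\<lambda>n. 1)" using XT unfolding T_def by auto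
  ultimately have nz1: "nrm2 dB z = 1" using LIMSEQ_unique tendsto_const by metis
  have oz: "\<forall>s<k. ip dB (w s) z = 0"
  proof (intro allI impI)
    fix s assume s: "s < k"
    have "(\<lambda>n. ip dB (w s) (X (\<sigma> n))) \<longlonglongrightarrow> ip dB (w s) z"
      unfolding ip_def by (intro tendsto_intros conv)
    moreover have "(\<lambda>n. ip dB (w s) (X (\<sigma> n))) = (\<lambda>n. 0)" using XT s unfolding T_def by auto
    ultimately show "ip dB (w s) z = 0" using LIMSEQ_unique tendsto_const by metis
  qed
  have "(\<lambda>n. F (X (\<sigma> n))) \<longlonglongrightarrow> F z"
    unfolding F_def fval_def nrm2_def mv_def by (intro tendsto_intros conv)
  moreover have "(\<lambda>n. F (X (\<sigma> n))) \<longlonglongrightarrow> M"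
    using LIMSEQ_subseq_LIMSEQ[OF FX sm] by (simp add: o_def)
  ultimately have Fz: "F z = M" using LIMSEQ_unique by blast
  have hom: "\<And>x. (\<forall>s<k. ip dB (w s) x = 0) \<Longrightarrow> F x \<le> M * nrm2 dB x"
  proof -
    fix x assume o: "\<forall>s<k. ip dB (w s) x = 0"
    show "F x \<le> M * nrm2 dB x"
    proof (cases "nrm2 dB x > 0")
      case True
      from norm_in_T[OF o True] Mup have "F x / nrm2 dB x \<le> M" by metis
      thus ?thesis using True by (simp add: divide_le_eq mult.commute)
    next
      case False
      hence "nrm2 dB x = 0" using nrm2_nonneg[of dB x] by linarith
      hence "\<forall>b<dB. x b = 0" by (simp add: nrm2_zero_iff)
      hence "\<forall>a. mv dB Phi x a = 0" by (simp add: mv_def)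
      hence "F x = 0" unfolding F_def fval_def nrm2_def by simp
      thus ?thesis using \<open>nrm2 dB x = 0\<close> by simp
    qed
  qed
  have fo_re: "\<And>y. (\<forall>s<k. ip dB (w s) y = 0) \<Longrightarrow> ip dB z y = 0 \<Longrightarrow>
      Re (ip dA (mv dB Phi z) (mv dB Phi y)) = 0"
  proof -
    fix y assume oy: "\<forall>s<k. ip dB (w s) y = 0" and zy: "ip dB z y = 0"
    show "Re (ip dA (mv dB Phi z) (mv dB Phi y)) = 0"
    proof (rule quad_le0)
      fix t :: real
      have o: "\<forall>s<k. ip dB (w s) (\<lambda>j. z j + complex_of_real t * y j) = 0"
        using oz oy by (simp add: ip_add_right ip_scale_right)
      have "F (\<lambda>j. z j + complex_of_real t * y j) \<le> M * nrm2 dB (\<lambda>j. z j + complex_of_real t * y j)"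
        by (rule hom[OF o])
      hence "M + 2 * t * Re (ip dA (mv dB Phi z) (mv dB Phi y)) + t\<^sup>2 * F y \<le> M * (1 + t\<^sup>2 * nrm2 dB y)"
        unfolding F_def by (simp add: fval_expand nrm2_expand nz1 zy Fz[unfolded F_def])
      thus "2 * t * Re (ip dA (mv dB Phi z) (mv dB Phi y)) + t\<^sup>2 * (F y - M * nrm2 dB y) \<le> 0"
        by (simp add: algebra_simps)
    qed
  qed
  have fo: "\<And>y. (\<forall>s<k. ip dB (w s) y = 0) \<Longrightarrow> ip dB z y = 0 \<Longrightarrow>
      ip dA (mv dB Phi z) (mv dB Phi y) = 0"
  proof -
    fix y assume oy: "\<forall>s<k. ip dB (w s) y = 0" and zy: "ip dB z y = 0"
    have r1: "Re (ip dA (mv dB Phi z) (mv dB Phi y)) = 0" by (rule fo_re[OF oy zy])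
    have oy': "\<forall>s<k. ip dB (w s) (\<lambda>j. \<i> * y j) = 0" using oy by (simp add: ip_scale_right)
    have zy': "ip dB z (\<lambda>j. \<i> * y j) = 0" using zy by (simp add: ip_scale_right)
    have "Re (ip dA (mv dB Phi z) (mv dB Phi (\<lambda>j. \<i> * y j))) = 0" by (rule fo_re[OF oy' zy'])
    moreover have "mv dB Phi (\<lambda>j. \<i> * y j) = (\<lambda>a. \<i> * mv dB Phi y a)" using mv_scale by blast
    ultimately have "Im (ip dA (mv dB Phi z) (mv dB Phi y)) = 0" by (simp add: ip_scale_right)
    with r1 show "ip dA (mv dB Phi z) (mv dB Phi y) = 0" by (simp add: complex_eq_iff)
  qed
  have on': "orthonormal_fam dB (Suc k) (w(k:=z))"
    unfolding orthonormal_fam_ip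
  proof (intro allI impI)
    fix s t assume s: "s < Suc k" and t: "t < Suc k"
    have zz: "ip dB z z = 1" by (simp add: ip_self nz1)
    show "ip dB ((w(k:=z)) s) ((w(k:=z)) t) = (if s = t then 1 else 0)"
    proof (cases "s = k")
      case True
      show ?thesis
      proof (cases "t = k")
        case True with \<open>s = k\<close> zz show ?thesis by simp
      next
        case False
        hence "t < k" using t by simp
        hence "ip dB (w t) z = 0" using oz by simp
        hence "ip dB z (w t) = 0" by (metis ip_cnj complex_cnj_zero)
        with False True show ?thesis by simp
      qed
    next
      case False
      hence sk: "s < k" using s by simp
      show ?thesis
      proof (cases "t = k")
        case True with False sk oz show ?thesis by simp
      next
        case False
        hence "t < k" using t by simp
        with sk \<open>s \<noteq> k\<close> False orthonormal_famD[OF on sk \<open>t < k\<close>] show ?thesis by simp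
      qed
    qed
  qed
  have orth_z: "\<And>x. ip dB z x = 0 \<Longrightarrow> ip dA (mv dB Phi z) (mv dB Phi x) = 0"
  proof -
    fix x assume zx: "ip dB z x = 0"
    define c where "c s = ip dB (w s) x" for s
    define x' where "x' j = x j - (\<Sum>s<k. c s * w s j)" for j
    have ox': "\<forall>s<k. ip dB (w s) x' = 0"
    proof (intro allI impI)
      fix s assume s: "s < k"
      have "ip dB (w s) x' = c s - (\<Sum>t<k. c t * ip dB (w s) (w t))"
        unfolding x'_def c_def by (simp add: ip_diff_right ip_sum_right)
      also have "(\<Sum>t<k. c t * ip dB (w s) (w t)) = (\<Sum>t<k. c t * (if s = t then 1 else 0))"
        by (intro sum.cong refl) (simp add: orthonormal_famD[OF on s])
      also have "\<dots> = c s" using s by (rule sum_delta_left)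
      finally show "ip dB (w s) x' = 0" by simp
    qed
    have "ip dB z x' = ip dB z x - (\<Sum>t<k. c t * ip dB z (w t))"
      unfolding x'_def by (simp add: ip_diff_right ip_sum_right)
    also have "(\<Sum>t<k. c t * ip dB z (w t)) = 0"
    proof (rule sum.neutral, intro ballI)
      fix t assume "t \<in> {..<k}"
      hence "ip dB (w t) z = 0" using oz by simp
      hence "ip dB z (w t) = 0" by (metis ip_cnj complex_cnj_zero)
      thus "c t * ip dB z (w t) = 0" by simp
    qed
    finally have zx': "ip dB z x' = 0" using zx by simp
    have A: "ip dA (mv dB Phi z) (mv dB Phi x') = 0" by (rule fo[OF ox' zx'])
    have mvx: "mv dB Phi x = (\<lambda>a. mv dB Phi x' a + (\<Sum>s<k. c s * mv dB Phi (w s) a))"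
      unfolding x'_def by (simp add: mv_diff mv_sum)
    have "ip dA (mv dB Phi z) (mv dB Phi x) =
        ip dA (mv dB Phi z) (mv dB Phi x') + (\<Sum>s<k. c s * ip dA (mv dB Phi z) (mv dB Phi (w s)))"
      unfolding mvx ip_add_right ip_sum_right ..
    also have "(\<Sum>s<k. c s * ip dA (mv dB Phi z) (mv dB Phi (w s))) = 0"
    proof (rule sum.neutral, intro ballI)
      fix s assume "s \<in> {..<k}"
      hence s: "s < k" by simp
      hence "ip dA (mv dB Phi (w s)) (mv dB Phi z) = 0" using orth oz by blast
      hence "ip dA (mv dB Phi z) (mv dB Phi (w s)) = 0" by (metis ip_cnj complex_cnj_zero)
      thus "c s * ip dA (mv dB Phi z) (mv dB Phi (w s)) = 0" by simp
    qed
    finally show "ip dA (mv dB Phi z) (mv dB Phi x) = 0" using A by simp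
  qed
  have "Inv dA dB Phi (Suc k) (w(k:=z))"
    unfolding Inv_def
  proof (intro conjI allI impI)
    show "orthonormal_fam dB (Suc k) (w(k := z))" by (rule on')
  next
    fix s x assume s: "s < Suc k" and sx: "ip dB ((w(k := z)) s) x = 0"
    show "ip dA (mv dB Phi ((w(k := z)) s)) (mv dB Phi x) = 0"
    proof (cases "s = k")
      case True thus ?thesis using sx orth_z by simp
    next
      case False thus ?thesis using sx orth s by simp
    qed
  next
    fix s assume s: "s < Suc k"
    show "fval dA dB Phi ((w(k := z)) s) > 0"
    proof (cases "s = k")
      case True thus ?thesis using Fz Mpos unfolding F_def by simp
    next
      case False thus ?thesis using pos s by simp
    qed
  qed
  thus ?thesis by blast
qed

lemma schmidt_exists: "\<exists>r. schmidt_decomp dA dB Phi r"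
proof -
  have main: "\<And>k w. Inv dA dB Phi k w \<Longrightarrow> \<exists>r. schmidt_decomp dA dB Phi r"
  proof -
    fix k w assume "Inv dA dB Phi k w"
    thus "\<exists>r. schmidt_decomp dA dB Phi r"
    proof (induction "dB - k" arbitrary: k w rule: less_induct)
      case less
      show ?case
      proof (cases "\<forall>x. (\<forall>s<k. ip dB (w s) x = 0) \<longrightarrow> (\<forall>a<dA. mv dB Phi x a = 0)")
        case True
        thus ?thesis using finish[OF less.prems] by blast
      next
        case False
        then obtain x0 a0 where "\<forall>s<k. ip dB (w s) x0 = 0" "a0 < dA" "mv dB Phi x0 a0 \<noteq> 0" by blast
        from step[OF less.prems this] obtain z where inv': "Inv dA dB Phi (Suc k) (w(k:=z))" by blast
        hence "Suc k \<le> dB" using orthonormal_le_dim unfolding Inv_def by blast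
        hence "dB - Suc k < dB - k" by simp
        from less.hyps[OF this inv'] show ?thesis .
      qed
    qed
  qed
  have "Inv dA dB Phi 0 (\<lambda>_ _. 0)" by (simp add: Inv_def orthonormal_fam_def)
  thus ?thesis by (rule main)
qed


lemma sum_blocks: "(\<Sum>b< n*q. f b) = (\<Sum>j<n. \<Sum>l<q. f (j*q + l))" for n q :: nat
proof -
  have "(\<Sum>b< n*q. f b) = (\<Sum>j<n. sum f {j*q..<j*q+q})" by (rule sum.nat_group[symmetric])
  also have "\<dots> = (\<Sum>j<n. \<Sum>l<q. f (j*q + l))"
  proof (rule sum.cong[OF refl])
    fix j
    have "sum f {j*q..<j*q+q} = sum (f \<circ> plus (j*q)) {0..<q}"
      using sum.atLeastLessThan_shift_0[of f "j*q" "j*q+q"] by simp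
    thus "sum f {j*q..<j*q+q} = (\<Sum>l<q. f (j*q + l))" by (simp add: atLeast0LessThan)
  qed
  finally show ?thesis .
qed

lemma kraus_ip:
  assumes kr: "kraus d d' Ks"
  shows "(\<Sum>m<length Ks. \<Sum>r<d'. cnj (\<Sum>c<d. (Ks!m) r c * x c) * (\<Sum>c<d. (Ks!m) r c * y c))
       = (\<Sum>c<d. cnj (x c) * y c)"
proof -
  let ?K = "\<lambda>m. Ks!m"
  let ?g = "\<lambda>m r c c'. (cnj (x c) * y c') * (cnj (?K m r c) * ?K m r c')"
  have "(\<Sum>m<length Ks. \<Sum>r<d'. cnj (\<Sum>c<d. ?K m r c * x c) * (\<Sum>c<d. ?K m r c * y c))
      = (\<Sum>m<length Ks. \<Sum>r<d'. \<Sum>c<d. \<Sum>c'<d. ?g m r c c')"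
    by (simp add: sum_distrib_left sum_distrib_right mult_ac)
  also have "\<dots> = (\<Sum>m<length Ks. \<Sum>c<d. \<Sum>r<d'. \<Sum>c'<d. ?g m r c c')"
    by (rule sum.cong[OF refl], rule sum.swap)
  also have "\<dots> = (\<Sum>m<length Ks. \<Sum>c<d. \<Sum>c'<d. \<Sum>r<d'. ?g m r c c')"
    by (rule sum.cong[OF refl], rule sum.cong[OF refl], rule sum.swap)
  also have "\<dots> = (\<Sum>c<d. \<Sum>m<length Ks. \<Sum>c'<d. \<Sum>r<d'. ?g m r c c')"
    by (rule sum.swap)
  also have "\<dots> = (\<Sum>c<d. \<Sum>c'<d. \<Sum>m<length Ks. \<Sum>r<d'. ?g m r c c')"
    by (rule sum.cong[OF refl], rule sum.swap)
  also have "\<dots> = (\<Sum>c<d. \<Sum>c'<d. (cnj (x c) * y c') *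
        (\<Sum>m<length Ks. \<Sum>r<d'. cnj (?K m r c) * ?K m r c'))"
    by (simp add: sum_distrib_left)
  also have "\<dots> = (\<Sum>c<d. \<Sum>c'<d. (cnj (x c) * y c') * (if c = c' then 1 else 0))"
    using kr unfolding kraus_def by (intro sum.cong refl) simp
  also have "\<dots> = (\<Sum>c<d. cnj (x c) * y c)"
  proof (rule sum.cong[OF refl])
    fix c assume "c \<in> {..<d}"
    hence c: "c < d" by simp
    have "(\<Sum>c'<d. (cnj (x c) * y c') * (if c = c' then 1 else 0)) = (\<Sum>c'\<in>{..<d}. if c = c' then cnj (x c) * y c' else 0)"
      by (rule sum.cong) auto
    also have "\<dots> = cnj (x c) * y c" using c by (simp add: sum.delta')
    finally show "(\<Sum>c'<d. (cnj (x c) * y c') * (if c = c' then 1 else 0)) = cnj (x c) * y c" .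
  qed
  finally show ?thesis .
qed

lemma bob_orth:
  assumes kr: "kraus dB dB' Ls"
    and idf: "\<forall>n<length Ls. identified dA dB' (map (bob_op dB (Ls!n)) S)"
    and k: "k < length S" and l: "l < length S" and kl: "k \<noteq> l" and a: "a < dA" and a': "a' < dA"
  shows "(\<Sum>b<dB. cnj ((S!k) a b) * (S!l) a' b) = 0"
proof -
  have "(\<Sum>b<dB. cnj ((S!k) a b) * (S!l) a' b) =
     (\<Sum>m<length Ls. \<Sum>r<dB'. cnj (\<Sum>c<dB. (Ls!m) r c * (S!k) a c) * (\<Sum>c<dB. (Ls!m) r c * (S!l) a' c))"
    using kraus_ip[OF kr, of "\<lambda>c. (S!k) a c" "\<lambda>c. (S!l) a' c"] by simp
  also have "\<dots> = 0"
  proof (rule sum.neutral, intro ballI)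
    fix m assume "m \<in> {..<length Ls}"
    hence m: "m < length Ls" by simp
    have "identified dA dB' (map (bob_op dB (Ls!m)) S)" using idf m by simp
    hence "\<not> (nonzero_state dA dB' (bob_op dB (Ls!m) (S!k)) \<and> nonzero_state dA dB' (bob_op dB (Ls!m) (S!l)))"
      using k l kl unfolding identified_def by auto
    hence "(\<forall>a<dA. \<forall>r<dB'. bob_op dB (Ls!m) (S!k) a r = 0) \<or> (\<forall>a<dA. \<forall>r<dB'. bob_op dB (Ls!m) (S!l) a r = 0)"
      unfolding nonzero_state_def by blast
    thus "(\<Sum>r<dB'. cnj (\<Sum>c<dB. (Ls!m) r c * (S!k) a c) * (\<Sum>c<dB. (Ls!m) r c * (S!l) a' c)) = 0"
      using a a' unfolding bob_op_def by (auto simp del: cnj_sum)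
  qed
  finally show ?thesis .
qed


definition Aop :: "nat \<Rightarrow> cmat \<Rightarrow> cmat \<Rightarrow> cvec \<Rightarrow> nat \<Rightarrow> nat \<Rightarrow> complex" where
  "Aop p K Phi x a l = (\<Sum>c<3*p. K a c * x (c div p) * Phi (c mod p) l)"

definition Bop :: "nat \<Rightarrow> cmat \<Rightarrow> cmat \<Rightarrow> nat \<Rightarrow> nat \<Rightarrow> nat \<Rightarrow> complex" where
  "Bop p K Phi i a l = (\<Sum>c<p. K a (i*p + c) * Phi c l)"

lemma psi_formula:
  "alice_op (3*p) K (tensor_anc p q Phi (x,y)) a b = y (b div q) * Aop p K Phi x a (b mod q)"
  unfolding alice_op_def tensor_anc_def Aop_def by (simp add: sum_distrib_left mult_ac)

lemma inner_formula:
  assumes q: "q > 0"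
  shows "(\<Sum>b<3*q. cnj (alice_op (3*p) K (tensor_anc p q Phi (x,y)) a b) *
                  alice_op (3*p) K (tensor_anc p q Phi (x',y')) a' b)
       = (\<Sum>j<3. cnj (y j) * y' j) * ip q (\<lambda>l. Aop p K Phi x a l) (\<lambda>l. Aop p K Phi x' a' l)"
proof -
  have "(\<Sum>b<3*q. cnj (alice_op (3*p) K (tensor_anc p q Phi (x,y)) a b) *
                  alice_op (3*p) K (tensor_anc p q Phi (x',y')) a' b)
     = (\<Sum>j<3. \<Sum>l<q. cnj (y j * Aop p K Phi x a l) * (y' j * Aop p K Phi x' a' l))"
    unfolding psi_formula sum_blocks using q by (intro sum.cong refl) simp
  also have "\<dots> = (\<Sum>j<3. (cnj (y j) * y' j) * ip q (\<lambda>l. Aop p K Phi x a l) (\<lambda>l. Aop p K Phi x' a' l))"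
    unfolding ip_def by (intro sum.cong refl) (simp add: sum_distrib_left mult_ac)
  also have "\<dots> = (\<Sum>j<3. cnj (y j) * y' j) * ip q (\<lambda>l. Aop p K Phi x a l) (\<lambda>l. Aop p K Phi x' a' l)"
    by (simp add: sum_distrib_right)
  finally show ?thesis .
qed

lemma Aop_blocks:
  assumes p: "p > 0"
  shows "Aop p K Phi x a l = x 0 * Bop p K Phi 0 a l + x 1 * Bop p K Phi 1 a l + x 2 * Bop p K Phi 2 a l"
proof -
  have "Aop p K Phi x a l = (\<Sum>i<3. \<Sum>c<p. K a (i*p + c) * x ((i*p+c) div p) * Phi ((i*p+c) mod p) l)"
    unfolding Aop_def by (rule sum_blocks)
  also have "\<dots> = (\<Sum>i<3. x i * Bop p K Phi i a l)"
    unfolding Bop_def using p by (intro sum.cong refl) (simp add: sum_distrib_left mult_ac)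
  also have "\<dots> = x 0 * Bop p K Phi 0 a l + x 1 * Bop p K Phi 1 a l + x 2 * Bop p K Phi 2 a l"
    by (simp add: eval_nat_numeral)
  finally show ?thesis .
qed

lemma s2: "complex_of_real (sqrt 2) \<noteq> 0" by simp

lemma ip_pm: "ip d (\<lambda>l. c * (f l + g l)) (\<lambda>l. c * (f l - g l)) =
   cnj c * c * (ip d f f - ip d f g + ip d g f - ip d g g)"
  by (simp add: ip_scale_left ip_scale_right ip_add_left ip_diff_right algebra_simps)


lemma nine_orth:
  assumes q: "q > 0" and kr: "kraus (3*q) dB2 Ls"
    and idf: "\<forall>n<length Ls. identified dA2 dB2 (map (bob_op (3*q) (Ls ! n) \<circ> alice_op (3*p) K) (nine_with p q Phi))"
    and k: "k < 9" and l: "l < 9" and kl: "k \<noteq> l" and a: "a < dA2"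
  shows "(\<Sum>j<3. cnj (snd (nine_states!k) j) * snd (nine_states!l) j) *
         ip q (\<lambda>c. Aop p K Phi (fst (nine_states!k)) a c) (\<lambda>c. Aop p K Phi (fst (nine_states!l)) a c) = 0"
proof -
  let ?S = "map (alice_op (3*p) K) (nine_with p q Phi)"
  have len9: "length (nine_states) = 9" by (simp add: nine_states_def)
  have len: "length ?S = 9" by (simp add: nine_with_def len9)
  have idf': "\<forall>n<length Ls. identified dA2 dB2 (map (bob_op (3*q) (Ls ! n)) ?S)"
    using idf by (simp only: map_map[symmetric])
  have kS: "k < length ?S" and lS: "l < length ?S" using k l len by simp_all
  have "(\<Sum>b<3*q. cnj ((?S!k) a b) * (?S!l) a b) = 0"
    by (rule bob_orth[OF kr idf' kS lS kl a a])
  moreover have "?S!k = alice_op (3*p) K (tensor_anc p q Phi (fst (nine_states!k), snd (nine_states!k)))"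
    using k len9 by (simp add: nine_with_def)
  moreover have "?S!l = alice_op (3*p) K (tensor_anc p q Phi (fst (nine_states!l), snd (nine_states!l)))"
    using l len9 by (simp add: nine_with_def)
  ultimately show ?thesis
    using inner_formula[OF q, of p K Phi "fst (nine_states!k)" "snd (nine_states!k)" a
        "fst (nine_states!l)" "snd (nine_states!l)" a] by simp
qed

lemma ket_vals:
  "ket 0 0 = 1" "ket 0 (Suc 0) = 0" "ket 0 2 = 0"
  "ket (Suc 0) 0 = 0" "ket (Suc 0) (Suc 0) = 1" "ket (Suc 0) 2 = 0"
  "ket 2 0 = 0" "ket 2 (Suc 0) = 0" "ket 2 2 = 1"
  by (simp_all add: ket_def)

lemma sum3: "(\<Sum>j<3. f j) = f 0 + f (Suc 0) + (f 2 :: complex)"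
  by (simp add: eval_nat_numeral)


lemma ip_trunc2: "(\<And>b. b < d \<Longrightarrow> x b = x' b) \<Longrightarrow> (\<And>b. b < d \<Longrightarrow> y b = y' b) \<Longrightarrow> ip d x y = ip d x' y'"
  by (simp add: ip_def)

lemma core_zero:
  assumes p: "p > 0" and q: "q > 0"
    and dec: "\<forall>a<p. \<forall>b<q. Phi a b = (\<Sum>t<r. complex_of_real (lam t) * u t a * v t b)"
    and lam: "\<forall>t<r. lam t > 0" and ov: "orthonormal_fam q r v" and r3: "r < 3"
    and kr: "kraus (3*q) dB2 Ls"
    and idf: "\<forall>n<length Ls. identified dA2 dB2 (map (bob_op (3*q) (Ls ! n) \<circ> alice_op (3*p) K) (nine_with p q Phi))"
    and a: "a < dA2" and t: "t < r"
  shows "(\<Sum>c<p. K a c * u t c) = 0"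
proof -
  define B where "B i = Bop p K Phi i a" for i
  define c2 where "c2 = inverse (complex_of_real (sqrt 2))"
  have c2nz: "c2 \<noteq> 0" unfolding c2_def by simp
  have cc2: "cnj c2 = c2" unfolding c2_def by simp
  have A0: "Aop p K Phi (ket 0) a = B 0" using Aop_blocks[OF p]
    by (auto simp: B_def ket_vals)
  have A1: "Aop p K Phi (ket (Suc 0)) a = B (Suc 0)" using Aop_blocks[OF p]
    by (auto simp: B_def ket_vals)
  have A2: "Aop p K Phi (ket 2) a = B 2" using Aop_blocks[OF p]
    by (auto simp: B_def ket_vals)
  have Ap01: "Aop p K Phi (ket_plus 0 (Suc 0)) a = (\<lambda>l. c2 * (B 0 l + B (Suc 0) l))" using Aop_blocks[OF p]
    by (auto simp: B_def ket_vals ket_plus_def c2_def divide_inverse algebra_simps)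
  have Am01: "Aop p K Phi (ket_minus 0 (Suc 0)) a = (\<lambda>l. c2 * (B 0 l - B (Suc 0) l))" using Aop_blocks[OF p]
    by (auto simp: B_def ket_vals ket_minus_def c2_def divide_inverse algebra_simps)
  have Ap12: "Aop p K Phi (ket_plus (Suc 0) 2) a = (\<lambda>l. c2 * (B (Suc 0) l + B 2 l))" using Aop_blocks[OF p]
    by (auto simp: B_def ket_vals ket_plus_def c2_def divide_inverse algebra_simps)
  have Am12: "Aop p K Phi (ket_minus (Suc 0) 2) a = (\<lambda>l. c2 * (B (Suc 0) l - B 2 l))" using Aop_blocks[OF p]
    by (auto simp: B_def ket_vals ket_minus_def c2_def divide_inverse algebra_simps)
  note NO = nine_orth[OF q kr idf _ _ _ a]
  have "(\<Sum>j<3. cnj (ket_plus 0 (Suc 0) j) * ket (Suc 0) j) * ip q (B 0) (B (Suc 0)) = 0"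
    using NO[of 0 8] by (simp add: nine_states_def A0 A1)
  moreover have "(\<Sum>j<3. cnj (ket_plus 0 (Suc 0) j) * ket (Suc 0) j) = c2"
    by (simp add: sum3 ket_plus_def ket_vals c2_def divide_inverse)
  ultimately have g01: "ip q (B 0) (B (Suc 0)) = 0" using c2nz by simp
  have "(\<Sum>j<3. cnj (ket_plus 0 (Suc 0) j) * ket_plus (Suc 0) 2 j) * ip q (B 0) (B 2) = 0"
    using NO[of 0 4] by (simp add: nine_states_def A0 A2)
  moreover have "(\<Sum>j<3. cnj (ket_plus 0 (Suc 0) j) * ket_plus (Suc 0) 2 j) = c2 * c2"
    by (simp add: sum3 ket_plus_def ket_vals c2_def divide_inverse)
  ultimately have g02: "ip q (B 0) (B 2) = 0" using c2nz by simp
  have "(\<Sum>j<3. cnj (ket (Suc 0) j) * ket_plus (Suc 0) 2 j) * ip q (B (Suc 0)) (B 2) = 0"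
    using NO[of 8 4] by (simp add: nine_states_def A1 A2)
  moreover have "(\<Sum>j<3. cnj (ket (Suc 0) j) * ket_plus (Suc 0) 2 j) = c2"
    by (simp add: sum3 ket_plus_def ket_vals c2_def divide_inverse)
  ultimately have g12: "ip q (B (Suc 0)) (B 2) = 0" using c2nz by simp
  have g10: "ip q (B (Suc 0)) (B 0) = 0" using g01 by (metis ip_cnj complex_cnj_zero)
  have g21: "ip q (B 2) (B (Suc 0)) = 0" using g12 by (metis ip_cnj complex_cnj_zero)
  have g20: "ip q (B 2) (B 0) = 0" using g02 by (metis ip_cnj complex_cnj_zero)
  have "(\<Sum>j<3. cnj (ket 2 j) * ket 2 j) * ip q (\<lambda>l. c2 * (B 0 l + B (Suc 0) l)) (\<lambda>l. c2 * (B 0 l - B (Suc 0) l)) = 0"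
    using NO[of 2 3] by (simp add: nine_states_def Ap01 Am01)
  hence "ip q (\<lambda>l. c2 * (B 0 l + B (Suc 0) l)) (\<lambda>l. c2 * (B 0 l - B (Suc 0) l)) = 0"
    by (simp add: sum3 ket_vals)
  hence g0011: "ip q (B 0) (B 0) = ip q (B (Suc 0)) (B (Suc 0))"
    unfolding ip_pm using c2nz cc2 g01 g10 by simp
  have "(\<Sum>j<3. cnj (ket 0 j) * ket 0 j) * ip q (\<lambda>l. c2 * (B (Suc 0) l + B 2 l)) (\<lambda>l. c2 * (B (Suc 0) l - B 2 l)) = 0"
    using NO[of 6 7] by (simp add: nine_states_def Ap12 Am12)
  hence "ip q (\<lambda>l. c2 * (B (Suc 0) l + B 2 l)) (\<lambda>l. c2 * (B (Suc 0) l - B 2 l)) = 0"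
    by (simp add: sum3 ket_vals)
  hence g1122: "ip q (B (Suc 0)) (B (Suc 0)) = ip q (B 2) (B 2)"
    unfolding ip_pm using c2nz cc2 g12 g21 by simp
  define \<beta> where "\<beta> i s = complex_of_real (lam s) * (\<Sum>c<p. K a (i*p + c) * u s c)" for i s
  have Bexp: "\<And>i l. l < q \<Longrightarrow> B i l = (\<Sum>s<r. \<beta> i s * v s l)"
  proof -
    fix i l assume l: "l < q"
    have "B i l = (\<Sum>c<p. K a (i*p + c) * (\<Sum>s<r. complex_of_real (lam s) * u s c * v s l))"
      unfolding B_def Bop_def using dec l by (intro sum.cong refl) simp
    also have "\<dots> = (\<Sum>c<p. \<Sum>s<r. complex_of_real (lam s) * (K a (i*p + c) * u s c) * v s l)"
      by (simp add: sum_distrib_left mult_ac)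
    also have "\<dots> = (\<Sum>s<r. \<Sum>c<p. complex_of_real (lam s) * (K a (i*p + c) * u s c) * v s l)"
      by (rule sum.swap)
    also have "\<dots> = (\<Sum>s<r. \<beta> i s * v s l)"
      unfolding \<beta>_def by (simp add: sum_distrib_left sum_distrib_right mult_ac)
    finally show "B i l = (\<Sum>s<r. \<beta> i s * v s l)" .
  qed
  have G: "\<And>i j. ip q (B i) (B j) = ip r (\<beta> i) (\<beta> j)"
  proof -
    fix i j
    have "ip q (B i) (B j) = ip q (\<lambda>l. \<Sum>s<r. \<beta> i s * v s l) (\<lambda>l. \<Sum>s<r. \<beta> j s * v s l)"
      by (rule ip_trunc2) (simp_all add: Bexp)
    also have "\<dots> = (\<Sum>s<r. cnj (\<beta> i s) * (\<Sum>s'<r. \<beta> j s' * ip q (v s) (v s')))"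
      by (simp add: ip_sum_left ip_sum_right)
    also have "\<dots> = (\<Sum>s<r. cnj (\<beta> i s) * \<beta> j s)"
    proof (rule sum.cong[OF refl])
      fix s assume "s \<in> {..<r}"
      hence s: "s < r" by simp
      have "(\<Sum>s'<r. \<beta> j s' * ip q (v s) (v s')) = (\<Sum>s'<r. \<beta> j s' * (if s = s' then 1 else 0))"
        by (intro sum.cong refl) (simp add: orthonormal_famD[OF ov s])
      also have "\<dots> = \<beta> j s" using s by (rule sum_delta_left)
      finally show "cnj (\<beta> i s) * (\<Sum>s'<r. \<beta> j s' * ip q (v s) (v s')) = cnj (\<beta> i s) * \<beta> j s" by simp
    qed
    finally show "ip q (B i) (B j) = ip r (\<beta> i) (\<beta> j)" by (simp add: ip_def)
  qed
  define N where "N = nrm2 r (\<beta> 0)"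
  have N0: "N = 0"
  proof (rule ccontr)
    assume "N \<noteq> 0"
    hence Npos: "N > 0" using nrm2_nonneg[of r] unfolding N_def by (metis less_eq_real_def)
    have gN: "\<And>i. i < 3 \<Longrightarrow> ip r (\<beta> i) (\<beta> i) = complex_of_real N"
    proof -
      fix i :: nat assume "i < 3"
      hence "i = 0 \<or> i = 1 \<or> i = 2" by auto
      moreover have "ip r (\<beta> 0) (\<beta> 0) = complex_of_real N" unfolding N_def by (simp add: ip_self)
      ultimately show "ip r (\<beta> i) (\<beta> i) = complex_of_real N"
        using g0011 g1122 G by auto
    qed
    have goff: "\<And>i j. i < 3 \<Longrightarrow> j < 3 \<Longrightarrow> i \<noteq> j \<Longrightarrow> ip r (\<beta> i) (\<beta> j) = 0"
    proof -
      fix i j :: nat assume "i < 3" "j < 3" "i \<noteq> j"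
      hence "(i = 0 \<and> j = 1) \<or> (i = 0 \<and> j = 2) \<or> (i = 1 \<and> j = 0) \<or> (i = 1 \<and> j = 2) \<or> (i = 2 \<and> j = 0) \<or> (i = 2 \<and> j = 1)"
        by auto
      thus "ip r (\<beta> i) (\<beta> j) = 0" using g01 g02 g10 g12 g20 g21 G by auto
    qed
    define w where "w i k = complex_of_real (1 / sqrt N) * \<beta> i k" for i k
    have "orthonormal_fam r 3 w"
      unfolding orthonormal_fam_ip
    proof (intro allI impI)
      fix i j :: nat assume i: "i < 3" and j: "j < 3"
      have "ip r (w i) (w j) = complex_of_real (1 / sqrt N) * complex_of_real (1 / sqrt N) * ip r (\<beta> i) (\<beta> j)"
        unfolding w_def ip_def sum_distrib_left by (intro sum.cong refl) (simp add: field_simps)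
      also have "\<dots> = (if i = j then 1 else 0)"
      proof (cases "i = j")
        case True
        have "complex_of_real (1 / sqrt N) * complex_of_real (1 / sqrt N) * complex_of_real N = 1"
          using Npos by (simp del: of_real_mult add: of_real_mult[symmetric])
        thus ?thesis using True gN[OF i] by simp
      next
        case False thus ?thesis using goff[OF i j] by simp
      qed
      finally show "ip r (w i) (w j) = (if i = j then 1 else 0)" .
    qed
    hence "3 \<le> r" by (rule orthonormal_le_dim)
    with r3 show False by simp
  qed
  hence "\<beta> 0 t = 0" using t unfolding N_def by (simp add: nrm2_zero_iff)
  moreover have "lam t > 0" using lam t by simp
  ultimately show ?thesis unfolding \<beta>_def by simp
qed


lemma partA:
  assumes p: "dA' > 0" and q: "dB' > 0" and unit: "unit_state dA' dB' Phi"
    and ow: "one_way_locc_dist (3 * dA') (3 * dB') (nine_with dA' dB' Phi)"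
  shows "schmidt_rank dA' dB' Phi \<ge> 3"
proof (rule ccontr)
  assume "\<not> schmidt_rank dA' dB' Phi \<ge> 3"
  hence r3: "schmidt_rank dA' dB' Phi < 3" by simp
  define r where "r = schmidt_rank dA' dB' Phi"
  have "schmidt_decomp dA' dB' Phi r"
    unfolding r_def schmidt_rank_def using schmidt_exists by (rule LeastI_ex)
  then obtain lam u v where lam: "\<forall>t<r. lam t > 0" and ou: "orthonormal_fam dA' r u"
    and ov: "orthonormal_fam dB' r v"
    and dec: "\<forall>a<dA'. \<forall>b<dB'. Phi a b = (\<Sum>t<r. complex_of_real (lam t) * u t a * v t b)"
    unfolding schmidt_decomp_def by blast
  have r0: "r > 0"
  proof (rule ccontr)
    assume "\<not> r > 0"
    hence "r = 0" by simp
    hence "\<forall>a<dA'. \<forall>b<dB'. Phi a b = 0" using dec by simp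
    hence "(\<Sum>a<dA'. \<Sum>b<dB'. (cmod (Phi a b))\<^sup>2) = 0" by simp
    with unit show False unfolding unit_state_def by simp
  qed
  from ow obtain dA2 Ks where kr: "kraus (3 * dA') dA2 Ks"
    and per: "\<forall>m<length Ks. \<exists>dB2 Ls. kraus (3 * dB') dB2 Ls \<and>
           (\<forall>n<length Ls. identified dA2 dB2 (map (bob_op (3 * dB') (Ls ! n) \<circ> alice_op (3 * dA') (Ks ! m)) (nine_with dA' dB' Phi)))"
    unfolding one_way_locc_dist_def by blast
  have zero: "\<And>m a. m < length Ks \<Longrightarrow> a < dA2 \<Longrightarrow> (\<Sum>c<dA'. (Ks!m) a c * u 0 c) = 0"
  proof -
    fix m a assume m: "m < length Ks" and a: "a < dA2"
    from per m obtain dB2 Ls where krb: "kraus (3 * dB') dB2 Ls"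
      and idf: "\<forall>n<length Ls. identified dA2 dB2 (map (bob_op (3 * dB') (Ls ! n) \<circ> alice_op (3 * dA') (Ks ! m)) (nine_with dA' dB' Phi))"
      by blast
    show "(\<Sum>c<dA'. (Ks!m) a c * u 0 c) = 0"
      by (rule core_zero[OF p q dec lam ov _ krb idf a r0]) (use r3 r_def in simp)
  qed
  define z where "z c = (if c < dA' then u 0 c else 0)" for c
  have zsum: "\<And>m a. (\<Sum>c<3*dA'. (Ks!m) a c * z c) = (\<Sum>c<dA'. (Ks!m) a c * u 0 c)"
  proof -
    fix m a
    have "(\<Sum>c<3*dA'. (Ks!m) a c * z c) = (\<Sum>c<dA'. (Ks!m) a c * z c)"
      by (rule sum.mono_neutral_right) (auto simp: z_def)
    also have "\<dots> = (\<Sum>c<dA'. (Ks!m) a c * u 0 c)" by (intro sum.cong refl) (simp add: z_def)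
    finally show "(\<Sum>c<3*dA'. (Ks!m) a c * z c) = (\<Sum>c<dA'. (Ks!m) a c * u 0 c)" .
  qed
  have "(\<Sum>m<length Ks. \<Sum>r<dA2. cnj (\<Sum>c<3*dA'. (Ks!m) r c * z c) * (\<Sum>c<3*dA'. (Ks!m) r c * z c))
       = (\<Sum>c<3*dA'. cnj (z c) * z c)"
    by (rule kraus_ip[OF kr])
  moreover have "(\<Sum>m<length Ks. \<Sum>r<dA2. cnj (\<Sum>c<3*dA'. (Ks!m) r c * z c) * (\<Sum>c<3*dA'. (Ks!m) r c * z c)) = 0"
    by (intro sum.neutral ballI) (simp add: zsum zero del: cnj_sum)
  moreover have "(\<Sum>c<3*dA'. cnj (z c) * z c) = 1"
  proof -
    have "(\<Sum>c<3*dA'. cnj (z c) * z c) = (\<Sum>c<dA'. cnj (z c) * z c)"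
      by (rule sum.mono_neutral_right) (auto simp: z_def)
    also have "\<dots> = (\<Sum>c<dA'. cnj (u 0 c) * u 0 c)" by (intro sum.cong refl) (simp add: z_def)
    also have "\<dots> = 1" using ou r0 unfolding orthonormal_fam_def by simp
    finally show ?thesis .
  qed
  ultimately show False by simp
qed


definition d3 :: "cmat \<Rightarrow> complex" where
 "d3 M = M 0 0 * M 1 1 * M 2 2 + M 0 1 * M 1 2 * M 2 0 + M 0 2 * M 1 0 * M 2 1
        - M 0 2 * M 1 1 * M 2 0 - M 0 0 * M 1 2 * M 2 1 - M 0 1 * M 1 0 * M 2 2"

definition d2 :: "cmat \<Rightarrow> complex" where
 "d2 M = M 0 0 * M 1 1 - M 0 1 * M 1 0"

lemma d3_rank2: "d3 (\<lambda>a b. p a * q b + p' a * q' b) = 0"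
  unfolding d3_def by algebra

lemma d2_rank1: "d2 (\<lambda>a b. p a * q b) = 0"
  unfolding d2_def by algebra

lemma d3_cong: "(\<And>a b. a < 3 \<Longrightarrow> b < 3 \<Longrightarrow> M a b = M' a b) \<Longrightarrow> d3 M = d3 M'"
  unfolding d3_def by simp

lemma d2_cong: "(\<And>a b. a < 2 \<Longrightarrow> b < 2 \<Longrightarrow> M a b = M' a b) \<Longrightarrow> d2 M = d2 M'"
  unfolding d2_def by simp

lemma decomp_small3:
  assumes "schmidt_decomp 3 3 Phi r" and "r < 3"
  shows "d3 Phi = 0"
proof -
  from assms(1) obtain lam u v where
    dec: "\<forall>a<3. \<forall>b<3. Phi a b = (\<Sum>t<r. complex_of_real (lam t) * u t a * v t b)"
    unfolding schmidt_decomp_def by blast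
  define p where "p a = (if 0 < r then complex_of_real (lam 0) * u 0 a else 0)" for a
  define p' where "p' a = (if 1 < r then complex_of_real (lam 1) * u 1 a else 0)" for a
  have eq: "\<And>a b. a < 3 \<Longrightarrow> b < 3 \<Longrightarrow> Phi a b = p a * v 0 b + p' a * v 1 b"
  proof -
    fix a b :: nat assume a: "a < 3" and b: "b < 3"
    have "r = 0 \<or> r = 1 \<or> r = 2" using assms(2) by auto
    thus "Phi a b = p a * v 0 b + p' a * v 1 b"
      using dec a b unfolding p_def p'_def by (auto simp: eval_nat_numeral)
  qed
  have "d3 Phi = d3 (\<lambda>a b. p a * v 0 b + p' a * v 1 b)" by (rule d3_cong) (rule eq)
  thus ?thesis by (simp add: d3_rank2)
qed

lemma decomp_small2:
  assumes "schmidt_decomp 2 2 Phi r" and "r < 2"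
  shows "d2 Phi = 0"
proof -
  from assms(1) obtain lam u v where
    dec: "\<forall>a<2. \<forall>b<2. Phi a b = (\<Sum>t<r. complex_of_real (lam t) * u t a * v t b)"
    unfolding schmidt_decomp_def by blast
  define p where "p a = (if 0 < r then complex_of_real (lam 0) * u 0 a else 0)" for a
  have eq: "\<And>a b. a < 2 \<Longrightarrow> b < 2 \<Longrightarrow> Phi a b = p a * v 0 b"
  proof -
    fix a b :: nat assume a: "a < 2" and b: "b < 2"
    have "r = 0 \<or> r = 1" using assms(2) by auto
    thus "Phi a b = p a * v 0 b"
      using dec a b unfolding p_def by auto
  qed
  have "d2 Phi = d2 (\<lambda>a b. p a * v 0 b)" by (rule d2_cong) (rule eq)
  thus ?thesis by (simp add: d2_rank1)
qed

definition Phi3 :: cmat where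
  "Phi3 k l = (if k = l \<and> k < 3 then 1 / complex_of_real (sqrt 3) else 0)"

definition Phi2 :: cmat where
  "Phi2 k l = (if k = l \<and> k < 2 then 1 / complex_of_real (sqrt 2) else 0)"

lemma sum3n: "(\<Sum>j<(3::nat). f j) = f 0 + f 1 + (f 2 :: 'a :: comm_monoid_add)"
  by (simp add: eval_nat_numeral)
lemma sum2n: "(\<Sum>j<(2::nat). f j) = f 0 + (f 1 :: 'a :: comm_monoid_add)"
  by (simp add: eval_nat_numeral)

lemma unit3: "unit_state 3 3 Phi3"
proof -
  have "(cmod (1 / complex_of_real (sqrt 3)))\<^sup>2 = 1/3"
    by (simp add: norm_divide power_divide)
  thus ?thesis unfolding unit_state_def Phi3_def by (simp add: sum3n)
qed

lemma unit2: "unit_state 2 2 Phi2"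
proof -
  have "(cmod (1 / complex_of_real (sqrt 2)))\<^sup>2 = 1/2"
    by (simp add: norm_divide power_divide)
  thus ?thesis unfolding unit_state_def Phi2_def by (simp add: sum2n)
qed

lemma orth_ket: "orthonormal_fam d r ket" if "r \<le> d"
  unfolding orthonormal_fam_def
proof (intro allI impI)
  fix s t assume s: "s < r" and t: "t < r"
  have "(\<Sum>k<d. cnj (ket s k) * ket t k) = (\<Sum>k\<in>{..<d}. if k = s then (if s = t then 1 else 0) else 0)"
    by (rule sum.cong) (auto simp: ket_def)
  also have "\<dots> = (if s = t then 1 else 0)" using s that by simp
  finally show "(\<Sum>k<d. cnj (ket s k) * ket t k) = (if s = t then 1 else 0)" .
qed

lemma rank3: "schmidt_rank 3 3 Phi3 = 3"
  unfolding schmidt_rank_def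
proof (rule Least_equality)
  show "schmidt_decomp 3 3 Phi3 3"
    unfolding schmidt_decomp_def
  proof (intro exI conjI)
    show "\<forall>t<3. (\<lambda>_. 1 / sqrt 3) t > (0::real)" by simp
    show "orthonormal_fam 3 3 ket" by (rule orth_ket) simp
    show "orthonormal_fam 3 3 ket" by (rule orth_ket) simp
    show "\<forall>a<3. \<forall>b<3. Phi3 a b = (\<Sum>t<3. complex_of_real ((\<lambda>_. 1 / sqrt 3) t) * ket t a * ket t b)"
      by (auto simp: Phi3_def sum3n ket_def less_Suc_eq numeral_3_eq_3)
  qed
next
  fix y assume y: "schmidt_decomp 3 3 Phi3 y"
  show "3 \<le> y"
  proof (rule ccontr)
    assume "\<not> 3 \<le> y"
    hence "d3 Phi3 = 0" using decomp_small3[OF y] by simp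
    thus False by (simp add: d3_def Phi3_def)
  qed
qed

lemma rank2: "schmidt_rank 2 2 Phi2 = 2"
  unfolding schmidt_rank_def
proof (rule Least_equality)
  show "schmidt_decomp 2 2 Phi2 2"
    unfolding schmidt_decomp_def
  proof (intro exI conjI)
    show "\<forall>t<2. (\<lambda>_. 1 / sqrt 2) t > (0::real)" by simp
    show "orthonormal_fam 2 2 ket" by (rule orth_ket) simp
    show "orthonormal_fam 2 2 ket" by (rule orth_ket) simp
    show "\<forall>a<2. \<forall>b<2. Phi2 a b = (\<Sum>t<2. complex_of_real ((\<lambda>_. 1 / sqrt 2) t) * ket t a * ket t b)"
      by (auto simp: Phi2_def sum2n ket_def less_Suc_eq numeral_2_eq_2)
  qed
next
  fix y assume y: "schmidt_decomp 2 2 Phi2 y"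
  show "2 \<le> y"
  proof (rule ccontr)
    assume "\<not> 2 \<le> y"
    hence "d2 Phi2 = 0" using decomp_small2[OF y] by simp
    thus False by (simp add: d2_def Phi2_def)
  qed
qed


definition sgn4 :: "nat \<Rightarrow> nat \<Rightarrow> complex" where
  "sgn4 f i = (if f = 0 then 1 else if i + 1 = f then 1 else -1)"

definition KA :: "nat \<Rightarrow> cmat" where
  "KA m = (\<lambda>r c. if r = 0 \<and> c < 9 \<and> c mod 3 = (c div 3 + m div 4) mod 3 then sgn4 (m mod 4) (c div 3) / 2 else 0)"

lemma lt3: "(a::nat) < 3 \<longleftrightarrow> a = 0 \<or> a = 1 \<or> a = 2" by auto
lemma lt4: "(a::nat) < 4 \<longleftrightarrow> a = 0 \<or> a = 1 \<or> a = 2 \<or> a = 3" by auto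

lemma sum4n: "(\<Sum>j<(4::nat). f j) = f 0 + f 1 + f 2 + (f 3 :: 'a :: comm_monoid_add)"
  by (simp add: eval_nat_numeral)

lemma sgn4_sq: "sgn4 f a * sgn4 f a = 1"
  by (simp add: sgn4_def)

lemma cnj_sgn4: "cnj (sgn4 f a) = sgn4 f a"
  by (simp add: sgn4_def)

lemma in3: "(x::nat) < 3 \<Longrightarrow> x \<in> {0,1,2}" by auto

lemma sgn_orth: "a < 3 \<Longrightarrow> a' < 3 \<Longrightarrow> (\<Sum>f<4. cnj (sgn4 f a) * sgn4 f a') = (if a = a' then 4 else 0)"
  apply (simp only: sum4n)
  apply (drule in3)+
  apply (elim insertE emptyE)
  apply (simp_all add: sgn4_def)
  done

lemma e_sum: "(x::nat) < 3 \<Longrightarrow> y < 3 \<Longrightarrow> a < 3 \<Longrightarrow>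
   (\<Sum>e<(3::nat). (if x = (a+e) mod 3 then 1 else 0) * (if y = (a+e) mod 3 then 1 else 0)) = (if x = y then 1 else (0::complex))"
  apply (simp only: sum3n)
  apply (drule in3)+
  apply (elim insertE emptyE)
  apply simp_all
  done

lemma KA_blk: "f < 4 \<Longrightarrow> KA (e*4+f) 0 c = (if c < 9 \<and> c mod 3 = (c div 3 + e) mod 3 then sgn4 f (c div 3) / 2 else 0)"
  by (simp add: KA_def)

lemma kraus_KA: "kraus 9 1 (map KA [0..<12])"
  unfolding kraus_def
proof (intro allI impI)
  fix i j :: nat assume i: "i < 9" and j: "j < 9"
  define a where "a = i div 3"
  define a' where "a' = j div 3"
  have a3: "a < 3" and a'3: "a' < 3" using i j unfolding a_def a'_def by auto
  have "(\<Sum>m<length (map KA [0..<12]). \<Sum>r<1. cnj ((map KA [0..<12] ! m) r i) * (map KA [0..<12] ! m) r j)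
      = (\<Sum>m<3*4. cnj (KA m 0 i) * KA m 0 j)" by simp
  also have "\<dots> = (\<Sum>e<3. \<Sum>f<4. cnj (KA (e*4+f) 0 i) * KA (e*4+f) 0 j)" by (rule sum_blocks)
  also have "\<dots> = (\<Sum>e<3. (if i mod 3 = (a+e) mod 3 then 1 else 0) * (if j mod 3 = (a'+e) mod 3 then 1 else 0) *
                         ((\<Sum>f<4. cnj (sgn4 f a) * sgn4 f a') / 4))"
    unfolding sum_divide_distrib sum_distrib_left
    by (intro sum.cong refl) (auto simp: KA_blk i j a_def a'_def)
  also have "\<dots> = (if i = j then 1 else 0)"
  proof (cases "a = a'")
    case True
    have "(\<Sum>e<3. (if i mod 3 = (a+e) mod 3 then 1 else 0) * (if j mod 3 = (a'+e) mod 3 then 1 else 0) *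
                         ((\<Sum>f<4. cnj (sgn4 f a) * sgn4 f a') / 4))
        = (\<Sum>e<3. (if i mod 3 = (a+e) mod 3 then 1 else 0) * (if j mod 3 = (a+e) mod 3 then 1 else (0::complex)))"
      using True sgn_orth[OF a3 a'3] by simp
    also have "\<dots> = (if i mod 3 = j mod 3 then 1 else 0)" by (rule e_sum) (auto simp: a3)
    also have "\<dots> = (if i = j then 1 else 0)"
      using True unfolding a_def a'_def by (metis div_mult_mod_eq)
    finally show ?thesis .
  next
    case False
    hence "i \<noteq> j" unfolding a_def a'_def by auto
    thus ?thesis using False sgn_orth[OF a3 a'3] by simp
  qed
  finally show "(\<Sum>m<length (map KA [0..<12]). \<Sum>r<1. cnj ((map KA [0..<12] ! m) r i) * (map KA [0..<12] ! m) r j)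
      = (if i = j then 1 else 0)" .
qed


definition xsf :: "nat \<Rightarrow> cvec" where "xsf n = fst (nine_states ! n)"
definition ysf :: "nat \<Rightarrow> cvec" where "ysf n = snd (nine_states ! n)"

definition hh :: complex where "hh = inverse (complex_of_real (sqrt 2))"

lemma hh_sq: "hh * hh = 1/2"
proof -
  have "complex_of_real (sqrt 2) * complex_of_real (sqrt 2) = 2"
    by (simp del: of_real_mult add: of_real_mult[symmetric])
  thus ?thesis unfolding hh_def by (simp add: field_simps)
qed
lemma hh_sq': "hh * (hh * z) = z/2" by (simp add: mult.assoc[symmetric] hh_sq)
lemma cnj_hh: "cnj hh = hh" by (simp add: hh_def)

lemma kp: "ket_plus a b j = (if j = a then hh else 0) + (if j = b then hh else 0)"
  by (simp add: ket_plus_def ket_def hh_def divide_inverse)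
lemma km: "ket_minus a b j = (if j = a then hh else 0) - (if j = b then hh else 0)"
  by (simp add: ket_minus_def ket_def hh_def divide_inverse)

lemma xs_tab:
  "xsf 0 = ket 0" "xsf 1 = ket 0" "xsf (Suc 0) = ket 0" "xsf 2 = ket_plus 0 1" "xsf 3 = ket_minus 0 1"
  "xsf 4 = ket 2" "xsf 5 = ket 2" "xsf 6 = ket_plus 1 2" "xsf 7 = ket_minus 1 2" "xsf 8 = ket 1"
  by (simp_all add: xsf_def nine_states_def)
lemma ys_tab:
  "ysf 0 = ket_plus 0 1" "ysf 1 = ket_minus 0 1" "ysf (Suc 0) = ket_minus 0 1" "ysf 2 = ket 2" "ysf 3 = ket 2"
  "ysf 4 = ket_plus 1 2" "ysf 5 = ket_minus 1 2" "ysf 6 = ket 0" "ysf 7 = ket 0" "ysf 8 = ket 1"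
  by (simp_all add: ysf_def nine_states_def)

lemma in9: "(n::nat) < 9 \<Longrightarrow> n \<in> {0,1,2,3,4,5,6,7,8}" by auto

lemma sum9n: "(\<Sum>j<(9::nat). f j) = f 0 + f 1 + f 2 + f 3 + f 4 + f 5 + f 6 + f 7 + (f 8 :: 'a :: comm_monoid_add)"
  by (simp add: eval_nat_numeral)

lemma cnj_xs: "n < 9 \<Longrightarrow> cnj (xsf n i) = xsf n i"
  apply (drule in9)
  apply (elim insertE emptyE)
  apply (simp_all add: xs_tab kp km ket_def cnj_hh)
  done
lemma cnj_ys: "n < 9 \<Longrightarrow> cnj (ysf n i) = ysf n i"
  apply (drule in9)
  apply (elim insertE emptyE)
  apply (simp_all add: ys_tab kp km ket_def cnj_hh)
  done

lemma nine_orth3: "n < 9 \<Longrightarrow> k < 9 \<Longrightarrow> n \<noteq> k \<Longrightarrow>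
  (\<Sum>j<3. ysf n j * ysf k j) * (\<Sum>i<3. xsf n i * xsf k i) = 0"
  apply (simp only: sum3n)
  apply (drule in9)+
  apply (elim insertE emptyE)
  apply (simp_all add: xs_tab ys_tab kp km ket_def hh_sq)
  done

lemma nine_complete: "i < 3 \<Longrightarrow> i' < 3 \<Longrightarrow> j < 3 \<Longrightarrow> j' < 3 \<Longrightarrow>
  (\<Sum>n<9. xsf n i * xsf n i' * (ysf n j * ysf n j')) = (if i = i' \<and> j = j' then 1 else 0)"
  apply (simp only: sum9n)
  apply (drule in3)+
  apply (elim insertE emptyE)
  apply (simp_all add: xs_tab ys_tab kp km ket_def hh_sq hh_sq')
  done


definition gp :: "nat \<Rightarrow> nat \<Rightarrow> nat" where "gp e l = (l + 3 - e) mod 3"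

lemma gp_lt: "gp e l < 3" by (simp add: gp_def)

lemma perm_sum: "e < 3 \<Longrightarrow> l < 3 \<Longrightarrow> (\<Sum>i<3. if l = (i+e) mod 3 then h i else 0) = (h (gp e l) :: complex)"
  apply (simp only: sum3n gp_def)
  apply (drule in3)+
  apply (elim insertE emptyE)
  apply simp_all
  done

lemma reidx: "e < 3 \<Longrightarrow> (\<Sum>l<3. H (gp e l)) = (\<Sum>i<3. H i :: complex)"
  apply (simp only: sum3n gp_def)
  apply (drule in3)
  apply (elim insertE emptyE)
  apply (simp_all add: ac_simps)
  done

lemma gp_inj: "e < 3 \<Longrightarrow> l < 3 \<Longrightarrow> l' < 3 \<Longrightarrow> gp e l = gp e l' \<longleftrightarrow> l = l'"
  apply (simp only: gp_def)
  apply (drule in3)+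
  apply (elim insertE emptyE)
  apply simp_all
  done

lemma KA_val: "i < 3 \<Longrightarrow> k < 3 \<Longrightarrow>
   KA m 0 (i*3+k) = (if k = (i + m div 4) mod 3 then sgn4 (m mod 4) i / 2 else 0)"
  by (simp add: KA_def)

definition c0 :: complex where "c0 = 1 / (2 * complex_of_real (sqrt 3))"

lemma alice_formula:
  assumes m: "m < 12"
  shows "alice_op 9 (KA m) (tensor_anc 3 3 Phi3 (x,y)) 0 b =
     c0 * y (b div 3) * (sgn4 (m mod 4) (gp (m div 4) (b mod 3)) * x (gp (m div 4) (b mod 3)))"
proof -
  define e where "e = m div 4"
  define f where "f = m mod 4"
  define j where "j = b div 3"
  define l where "l = b mod 3"
  have e3: "e < 3" using m unfolding e_def by simp
  have l3: "l < 3" unfolding l_def by simp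
  have "alice_op 9 (KA m) (tensor_anc 3 3 Phi3 (x,y)) 0 b =
        (\<Sum>c<3*3. KA m 0 c * (x (c div 3) * y j * Phi3 (c mod 3) l))"
    unfolding alice_op_def tensor_anc_def j_def l_def by simp
  also have "\<dots> = (\<Sum>i<3. \<Sum>k<3. KA m 0 (i*3+k) * (x i * y j * Phi3 k l))"
    by (subst sum_blocks) simp
  also have "\<dots> = (\<Sum>i<3. if l = (i+e) mod 3 then sgn4 f i / 2 * (x i * y j) / complex_of_real (sqrt 3) else 0)"
  proof (rule sum.cong[OF refl])
    fix i assume "i \<in> {..<3::nat}"
    hence i: "i < 3" by simp
    have "(\<Sum>k<3. KA m 0 (i*3+k) * (x i * y j * Phi3 k l)) =
          (\<Sum>k\<in>{..<3}. if k = l then (if l = (i+e) mod 3 then sgn4 f i / 2 else 0) * (x i * y j / complex_of_real (sqrt 3)) else 0)"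
      by (rule sum.cong[OF refl]) (auto simp: KA_val i e_def f_def Phi3_def)
    also have "\<dots> = (if l = (i+e) mod 3 then sgn4 f i / 2 * (x i * y j) / complex_of_real (sqrt 3) else 0)"
      using l3 by simp
    finally show "(\<Sum>k<3. KA m 0 (i*3+k) * (x i * y j * Phi3 k l)) =
          (if l = (i+e) mod 3 then sgn4 f i / 2 * (x i * y j) / complex_of_real (sqrt 3) else 0)" .
  qed
  also have "\<dots> = sgn4 f (gp e l) / 2 * (x (gp e l) * y j) / complex_of_real (sqrt 3)"
    by (rule perm_sum[OF e3 l3])
  also have "\<dots> = c0 * y j * (sgn4 f (gp e l) * x (gp e l))"
    by (simp add: c0_def field_simps)
  finally show ?thesis unfolding e_def f_def j_def l_def .
qed

definition LB :: "nat \<Rightarrow> nat \<Rightarrow> cmat" where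
  "LB m n = (\<lambda>r b. if r = 0 \<and> b < 9 then ysf n (b div 3) * (sgn4 (m mod 4) (gp (m div 4) (b mod 3)) * xsf n (gp (m div 4) (b mod 3))) else 0)"

lemma bob_formula:
  assumes m: "m < 12"
  shows "bob_op 9 (LB m n) (alice_op 9 (KA m) (tensor_anc 3 3 Phi3 (x,y))) 0 0 =
     c0 * (\<Sum>j<3. ysf n j * y j) * (\<Sum>i<3. xsf n i * x i)"
proof -
  define e where "e = m div 4"
  define f where "f = m mod 4"
  have e3: "e < 3" using m unfolding e_def by simp
  have "bob_op 9 (LB m n) (alice_op 9 (KA m) (tensor_anc 3 3 Phi3 (x,y))) 0 0 =
     (\<Sum>c<3*3. LB m n 0 c * alice_op 9 (KA m) (tensor_anc 3 3 Phi3 (x,y)) 0 c)"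
    unfolding bob_op_def by simp
  also have "\<dots> = (\<Sum>j<3. \<Sum>l<3. LB m n 0 (j*3+l) * alice_op 9 (KA m) (tensor_anc 3 3 Phi3 (x,y)) 0 (j*3+l))"
    by (rule sum_blocks)
  also have "\<dots> = (\<Sum>j<3. \<Sum>l<3. c0 * (ysf n j * y j) * (xsf n (gp e l) * x (gp e l)))"
  proof (intro sum.cong refl)
    fix j l assume "j \<in> {..<3::nat}" "l \<in> {..<3::nat}"
    hence j: "j < 3" and l: "l < 3" by auto
    have ss: "sgn4 f (gp e l) * sgn4 f (gp e l) = 1" by (rule sgn4_sq)
    have "LB m n 0 (j*3+l) * alice_op 9 (KA m) (tensor_anc 3 3 Phi3 (x,y)) 0 (j*3+l)
       = (ysf n j * (sgn4 f (gp e l) * xsf n (gp e l))) * (c0 * y j * (sgn4 f (gp e l) * x (gp e l)))"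
      unfolding alice_formula[OF m] using j l by (simp add: LB_def e_def f_def)
    also have "\<dots> = c0 * (ysf n j * y j) * (xsf n (gp e l) * x (gp e l)) * (sgn4 f (gp e l) * sgn4 f (gp e l))"
      by (simp add: ac_simps)
    finally show "LB m n 0 (j*3+l) * alice_op 9 (KA m) (tensor_anc 3 3 Phi3 (x,y)) 0 (j*3+l)
       = c0 * (ysf n j * y j) * (xsf n (gp e l) * x (gp e l))" using ss by simp
  qed
  also have "\<dots> = c0 * (\<Sum>j<3. ysf n j * y j) * (\<Sum>l<3. xsf n (gp e l) * x (gp e l))"
    by (simp add: sum_distrib_left sum_distrib_right mult_ac, rule sum.swap)
  also have "(\<Sum>l<3. xsf n (gp e l) * x (gp e l)) = (\<Sum>i<3. xsf n i * x i)"
    by (rule reidx[OF e3])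
  finally show ?thesis .
qed

lemma kraus_LB:
  assumes m: "m < 12"
  shows "kraus 9 1 (map (LB m) [0..<9])"
  unfolding kraus_def
proof (intro allI impI)
  fix b b' :: nat assume b: "b < 9" and b': "b' < 9"
  define e where "e = m div 4"
  define f where "f = m mod 4"
  have e3: "e < 3" using m unfolding e_def by simp
  define j where "j = b div 3"
  define l where "l = b mod 3"
  define j' where "j' = b' div 3"
  define l' where "l' = b' mod 3"
  have j3: "j < 3" and j'3: "j' < 3" using b b' unfolding j_def j'_def by auto
  have l3: "l < 3" and l'3: "l' < 3" unfolding l_def l'_def by auto
  have "(\<Sum>n<length (map (LB m) [0..<9]). \<Sum>r<1. cnj ((map (LB m) [0..<9] ! n) r b) * (map (LB m) [0..<9] ! n) r b')
      = (\<Sum>n<9. cnj (LB m n 0 b) * LB m n 0 b')" by simp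
  also have "\<dots> = (\<Sum>n<9. xsf n (gp e l) * xsf n (gp e l') * (ysf n j * ysf n j') * (sgn4 f (gp e l) * sgn4 f (gp e l')))"
  proof (rule sum.cong[OF refl])
    fix n assume "n \<in> {..<9::nat}"
    hence n: "n < 9" by simp
    show "cnj (LB m n 0 b) * LB m n 0 b' = xsf n (gp e l) * xsf n (gp e l') * (ysf n j * ysf n j') * (sgn4 f (gp e l) * sgn4 f (gp e l'))"
      using b b' by (simp add: LB_def cnj_xs[OF n] cnj_ys[OF n] cnj_sgn4 e_def f_def j_def l_def j'_def l'_def ac_simps)
  qed
  also have "\<dots> = (\<Sum>n<9. xsf n (gp e l) * xsf n (gp e l') * (ysf n j * ysf n j')) * (sgn4 f (gp e l) * sgn4 f (gp e l'))"
    by (simp add: sum_distrib_right)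
  also have "\<dots> = (if gp e l = gp e l' \<and> j = j' then 1 else 0) * (sgn4 f (gp e l) * sgn4 f (gp e l'))"
    by (simp add: nine_complete gp_lt j3 j'3)
  also have "\<dots> = (if b = b' then 1 else 0)"
  proof (cases "b = b'")
    case True thus ?thesis unfolding j_def j'_def l_def l'_def by (simp add: sgn4_sq)
  next
    case False
    have "\<not> (l = l' \<and> j = j')" using False unfolding j_def j'_def l_def l'_def by (metis div_mult_mod_eq)
    hence "\<not> (gp e l = gp e l' \<and> j = j')" using gp_inj[OF e3 l3 l'3] by simp
    hence "(if gp e l = gp e l' \<and> j = j' then 1 else (0::complex)) = 0" by (rule if_not_P)
    thus ?thesis using False by simp
  qed
  finally show "(\<Sum>n<length (map (LB m) [0..<9]). \<Sum>r<1. cnj ((map (LB m) [0..<9] ! n) r b) * (map (LB m) [0..<9] ! n) r b')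
      = (if b = b' then 1 else 0)" .
qed

lemma ns_pair: "nine_states ! k = (xsf k, ysf k)" by (simp add: xsf_def ysf_def)

lemma oneway_b: "one_way_locc_dist (3 * 3) (3 * 3) (nine_with 3 3 Phi3)"
  unfolding one_way_locc_dist_def
proof (rule exI[of _ 1], rule exI[of _ "map KA [0..<12]"], intro conjI allI impI)
  show "kraus (3*3) 1 (map KA [0..<12])" using kraus_KA by simp
next
  fix m assume "m < length (map KA [0..<12])"
  hence m: "m < 12" by simp
  show "\<exists>dB' Ls. kraus (3 * 3) dB' Ls \<and> (\<forall>n<length Ls.
            identified 1 dB' (map (bob_op (3 * 3) (Ls ! n) \<circ> alice_op (3 * 3) (map KA [0..<12] ! m)) (nine_with 3 3 Phi3)))"
  proof (rule exI[of _ 1], rule exI[of _ "map (LB m) [0..<9]"], intro conjI allI impI)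
    show "kraus (3*3) 1 (map (LB m) [0..<9])" using kraus_LB[OF m] by simp
  next
    fix n assume "n < length (map (LB m) [0..<9])"
    hence n: "n < 9" by simp
    have zero: "\<And>k. k < 9 \<Longrightarrow> k \<noteq> n \<Longrightarrow>
        \<not> nonzero_state 1 1 ((map (bob_op (3 * 3) (map (LB m) [0..<9] ! n) \<circ> alice_op (3 * 3) (map KA [0..<12] ! m)) (nine_with 3 3 Phi3)) ! k)"
    proof -
      fix k assume k: "k < 9" and kn: "k \<noteq> n"
      have len: "length (nine_with 3 3 Phi3) = 9" by (simp add: nine_with_def nine_states_def)
      have "(map (bob_op (3 * 3) (map (LB m) [0..<9] ! n) \<circ> alice_op (3 * 3) (map KA [0..<12] ! m)) (nine_with 3 3 Phi3)) ! k
          = bob_op 9 (LB m n) (alice_op 9 (KA m) (tensor_anc 3 3 Phi3 (xsf k, ysf k)))"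
        using k n m len by (simp add: nine_with_def ns_pair[symmetric])
      moreover have "bob_op 9 (LB m n) (alice_op 9 (KA m) (tensor_anc 3 3 Phi3 (xsf k, ysf k))) 0 0 = 0"
        using bob_formula[OF m] nine_orth3[OF n k] kn by simp
      ultimately show "\<not> nonzero_state 1 1 ((map (bob_op (3 * 3) (map (LB m) [0..<9] ! n) \<circ> alice_op (3 * 3) (map KA [0..<12] ! m)) (nine_with 3 3 Phi3)) ! k)"
        unfolding nonzero_state_def by simp
    qed
    show "identified 1 1 (map (bob_op (3 * 3) (map (LB m) [0..<9] ! n) \<circ> alice_op (3 * 3) (map KA [0..<12] ! m)) (nine_with 3 3 Phi3))"
      unfolding identified_def
    proof (intro allI impI)
      fix k l assume k: "k < length (map (bob_op (3 * 3) (map (LB m) [0..<9] ! n) \<circ> alice_op (3 * 3) (map KA [0..<12] ! m)) (nine_with 3 3 Phi3))"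
        and l: "l < length (map (bob_op (3 * 3) (map (LB m) [0..<9] ! n) \<circ> alice_op (3 * 3) (map KA [0..<12] ! m)) (nine_with 3 3 Phi3))"
        and nz: "nonzero_state 1 1 ((map (bob_op (3 * 3) (map (LB m) [0..<9] ! n) \<circ> alice_op (3 * 3) (map KA [0..<12] ! m)) (nine_with 3 3 Phi3)) ! k) \<and>
                 nonzero_state 1 1 ((map (bob_op (3 * 3) (map (LB m) [0..<9] ! n) \<circ> alice_op (3 * 3) (map KA [0..<12] ! m)) (nine_with 3 3 Phi3)) ! l)"
      have k9: "k < 9" and l9: "l < 9" using k l by (simp_all add: nine_with_def nine_states_def)
      have "k = n" using zero[OF k9] nz by blast
      moreover have "l = n" using zero[OF l9] nz by blast
      ultimately show "k = l" by simp
    qed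
  qed
qed


definition rowop :: "nat \<Rightarrow> cvec \<Rightarrow> cmat" where
  "rowop d w = (\<lambda>r c. if r = 0 \<and> c < d then w c else 0)"
definition projop :: "nat \<Rightarrow> (nat \<Rightarrow> bool) \<Rightarrow> cmat" where
  "projop d P = (\<lambda>r c. if r = c \<and> c < d \<and> P c then 1 else 0)"

lemma bob_row: "bob_op dB (rowop dB w) psi a r = (if r = 0 then (\<Sum>c<dB. w c * psi a c) else 0)"
  by (simp add: bob_op_def rowop_def)
lemma bob_proj: "bob_op dB (projop dB P) psi a r = (if r < dB \<and> P r then psi a r else 0)"
proof -
  have "bob_op dB (projop dB P) psi a r = (\<Sum>c\<in>{..<dB}. if c = r then (if r < dB \<and> P r then psi a r else 0) else 0)"
    unfolding bob_op_def projop_def by (rule sum.cong) auto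
  also have "\<dots> = (if r < dB \<and> P r then psi a r else 0)" by simp
  finally show ?thesis .
qed
lemma alice_row: "alice_op dA (rowop dA w) psi a b = (if a = 0 then (\<Sum>c<dA. w c * psi c b) else 0)"
  by (simp add: alice_op_def rowop_def)
lemma alice_proj: "alice_op dA (projop dA P) psi a b = (if a < dA \<and> P a then psi a b else 0)"
proof -
  have "alice_op dA (projop dA P) psi a b = (\<Sum>c\<in>{..<dA}. if c = a then (if a < dA \<and> P a then psi a b else 0) else 0)"
    unfolding alice_op_def projop_def by (rule sum.cong) auto
  also have "\<dots> = (if a < dA \<and> P a then psi a b else 0)" by simp
  finally show ?thesis .
qed

lemma ctr_row: "b < d \<Longrightarrow> b' < d \<Longrightarrow> (\<Sum>r<d. cnj (rowop d w r b) * rowop d w r b') = cnj (w b) * w b'"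
proof -
  assume b: "b < d" and b': "b' < d"
  have "(\<Sum>r<d. cnj (rowop d w r b) * rowop d w r b') = (\<Sum>r\<in>{..<d}. if r = 0 then cnj (w b) * w b' else 0)"
    unfolding rowop_def using b b' by (intro sum.cong refl) auto
  also have "\<dots> = cnj (w b) * w b'" using b by simp
  finally show ?thesis .
qed
lemma ctr_proj: "b < d \<Longrightarrow> b' < d \<Longrightarrow> (\<Sum>r<d. cnj (projop d P r b) * projop d P r b') = (if b = b' \<and> P b then 1 else 0)"
proof -
  assume b: "b < d" and b': "b' < d"
  have "(\<Sum>r<d. cnj (projop d P r b) * projop d P r b') = (\<Sum>r\<in>{..<d}. if r = b then (if b = b' \<and> P b then 1 else 0) else 0)"
    unfolding projop_def using b b' by (intro sum.cong refl) auto
  also have "\<dots> = (if b = b' \<and> P b then 1 else 0)" using b by simp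
  finally show ?thesis .
qed

lemma locc_mono: "locc_dist n dA dB S \<Longrightarrow> locc_dist (n + k) dA dB S"
  by (induction k) auto

lemma locc_alice: "kraus dA dA' Ks \<Longrightarrow> (\<forall>m<length Ks. locc_dist n dA' dB (map (alice_op dA (Ks!m)) S)) \<Longrightarrow> locc_dist (Suc n) dA dB S"
  by auto
lemma locc_bob: "kraus dB dB' Ls \<Longrightarrow> (\<forall>m<length Ls. locc_dist n dA dB' (map (bob_op dB (Ls!m)) S)) \<Longrightarrow> locc_dist (Suc n) dA dB S"
  by auto

lemma leaf: "(\<forall>k<9. k \<noteq> k0 \<longrightarrow> (\<forall>a<dA. \<forall>b<dB. F k a b = 0)) \<Longrightarrow> identified dA dB (map F [0..<9])"
  unfolding identified_def nonzero_state_def by auto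

lemma leaf_locc: "(\<forall>k<9. k \<noteq> k0 \<longrightarrow> (\<forall>a<dA. \<forall>b<dB. F k a b = 0)) \<Longrightarrow> locc_dist n dA dB (map F [0..<9])"
  using locc_mono[of 0 dA dB "map F [0..<9]" n] leaf by simp

definition tau :: "nat \<Rightarrow> nat \<Rightarrow> nat" where "tau \<rho> a = (if a = 2 then 1 - \<rho> else \<rho>)"
definition st1 :: "nat \<Rightarrow> cvec \<Rightarrow> cvec \<Rightarrow> cmat" where
  "st1 \<rho> x y a b = x a * y (b div 2) * Phi2 (tau \<rho> a) (b mod 2)"
definition RA :: "nat \<Rightarrow> cmat" where
  "RA \<rho> = (\<lambda>a c. if a < 3 \<and> c = 2*a + tau \<rho> a then 1 else 0)"

lemma Phi2_hh: "Phi2 k l = (if k = l \<and> k < 2 then hh else 0)"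
  by (simp add: Phi2_def hh_def divide_inverse)

lemma in2: "(x::nat) < 2 \<Longrightarrow> x \<in> {0,1}" by auto
lemma in6: "(x::nat) < 6 \<Longrightarrow> x \<in> {0,1,2,3,4,5}" by auto
lemma sum6n: "(\<Sum>j<(6::nat). f j) = f 0 + f 1 + f 2 + f 3 + f 4 + (f 5 :: 'a :: comm_monoid_add)"
  by (simp add: eval_nat_numeral)

lemma kraus_RA: "kraus 6 3 [RA 0, RA 1]"
  unfolding kraus_def
  apply (intro allI impI)
  apply (simp only: length_Cons list.size sum2n[simplified] add_0 one_add_one)
  apply (simp add: sum2n sum3n)
  apply (drule in6)+
  apply (elim insertE emptyE)
  apply (simp_all add: RA_def tau_def)
  done


lemma xs_big: "k < 9 \<Longrightarrow> 3 \<le> a \<Longrightarrow> xsf k a = 0"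
  apply (drule in9)
  apply (elim insertE emptyE)
  apply (simp_all add: xs_tab kp km ket_def)
  done

lemma nine_states_map: "nine_states = map (\<lambda>k. (xsf k, ysf k)) [0..<9]"
  by (rule nth_equalityI) (simp_all add: nine_states_def ns_pair[symmetric])

lemma stage1_state: assumes k: "k < 9" and r: "\<rho> < 2"
  shows "alice_op 6 (RA \<rho>) (tensor_anc 2 2 Phi2 (xsf k, ysf k)) = st1 \<rho> (xsf k) (ysf k)"
proof (rule ext, rule ext)
  fix a b
  show "alice_op 6 (RA \<rho>) (tensor_anc 2 2 Phi2 (xsf k, ysf k)) a b = st1 \<rho> (xsf k) (ysf k) a b"
  proof (cases "a < 3")
    case True
    have t2: "tau \<rho> a < 2" using r by (auto simp: tau_def)
    have "alice_op 6 (RA \<rho>) (tensor_anc 2 2 Phi2 (xsf k, ysf k)) a b =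
       (\<Sum>c\<in>{..<6}. if c = 2*a + tau \<rho> a then xsf k ((2*a + tau \<rho> a) div 2) * ysf k (b div 2) * Phi2 ((2*a + tau \<rho> a) mod 2) (b mod 2) else 0)"
      unfolding alice_op_def RA_def tensor_anc_def using True by (intro sum.cong refl) auto
    also have "\<dots> = xsf k ((2*a + tau \<rho> a) div 2) * ysf k (b div 2) * Phi2 ((2*a + tau \<rho> a) mod 2) (b mod 2)"
      using True t2 by simp
    also have "\<dots> = st1 \<rho> (xsf k) (ysf k) a b" using t2 by (simp add: st1_def)
    finally show ?thesis .
  next
    case False
    thus ?thesis unfolding alice_op_def RA_def st1_def using xs_big[OF k] by simp
  qed
qed

lemma stage1_list: "\<rho> < 2 \<Longrightarrow> map (alice_op 6 (RA \<rho>)) (nine_with 2 2 Phi2) = map (\<lambda>k. st1 \<rho> (xsf k) (ysf k)) [0..<9]"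
  unfolding nine_with_def nine_states_map by (simp add: stage1_state)

definition v1 :: "nat \<Rightarrow> cvec" where "v1 \<rho> c = (if c mod 2 = 1 - \<rho> then ket_plus 1 2 (c div 2) else 0)"
definition v2 :: "nat \<Rightarrow> cvec" where "v2 \<rho> c = (if c mod 2 = 1 - \<rho> then ket_minus 1 2 (c div 2) else 0)"
definition e3 :: "nat \<Rightarrow> cvec" where "e3 \<rho> c = (if c = 4 + \<rho> then 1 else 0)"
definition PC :: "nat \<Rightarrow> nat \<Rightarrow> bool" where "PC \<rho> c = ((c mod 2 = \<rho> \<and> c div 2 \<le> 1) \<or> (c mod 2 \<noteq> \<rho> \<and> c div 2 = 0))"

lemmas ev = xs_tab ys_tab kp km ket_def Phi2_hh tau_def st1_def hh_sq hh_sq'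

lemma in2r: "(\<rho>::nat) < 2 \<Longrightarrow> \<rho> = 0 \<or> \<rho> = 1" by auto

lemma leaf_v1: "\<rho> < 2 \<Longrightarrow> \<forall>k<9. k \<noteq> 4 \<longrightarrow> (\<forall>a<3. \<forall>b<6. bob_op 6 (rowop 6 (v1 \<rho>)) (st1 \<rho> (xsf k) (ysf k)) a b = 0)"
  apply (intro allI impI)
  apply (simp only: bob_row sum6n)
  apply (drule in2r)
  apply (drule in9)
  apply (drule in3)
  apply (elim disjE insertE emptyE)
  apply (simp_all add: ev v1_def)
  done


definition wa1 :: "nat \<Rightarrow> cvec" where "wa1 \<rho> c = (if c mod 2 = \<rho> then ket_plus 0 1 (c div 2) else 0)"
definition wa2 :: "nat \<Rightarrow> cvec" where "wa2 \<rho> c = (if c mod 2 = \<rho> then ket_minus 0 1 (c div 2) else 0)"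
definition wa3 :: "nat \<Rightarrow> cvec" where "wa3 \<rho> c = (if c = 4 + \<rho> then 1 else 0)"
definition wa4 :: "nat \<Rightarrow> cvec" where "wa4 \<rho> c = (if c = 1 - \<rho> then 1 else 0)"
definition wa5 :: "nat \<Rightarrow> cvec" where "wa5 \<rho> c = (if c = 3 - \<rho> then 1 else 0)"
definition wa6 :: "nat \<Rightarrow> cvec" where "wa6 \<rho> c = (if c = 5 - \<rho> then 1 else 0)"
definition wb1 :: "cvec" where "wb1 c = (if c = 0 then hh else if c = 1 then hh else 0)"
definition wb2 :: "cvec" where "wb2 c = (if c = 0 then hh else if c = 1 then - hh else 0)"
definition wb3 :: "nat \<Rightarrow> cvec" where "wb3 \<rho> c = (if c = 2 + \<rho> then 1 else 0)"
definition wb4 :: "nat \<Rightarrow> cvec" where "wb4 \<rho> c = (if c = 3 - \<rho> then 1 else 0)"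
definition wb5 :: "cvec" where "wb5 c = (if c = 4 then 1 else 0)"
definition wb6 :: "cvec" where "wb6 c = (if c = 5 then 1 else 0)"

definition L2 :: "nat \<Rightarrow> cmat list" where
  "L2 \<rho> = [rowop 6 (v1 \<rho>), rowop 6 (v2 \<rho>), rowop 6 (e3 \<rho>), projop 6 (PC \<rho>)]"
definition A3 :: "cmat list" where
  "A3 = [rowop 3 (ket_plus 0 1), rowop 3 (ket_minus 0 1), rowop 3 (ket 2)]"
definition AN :: "cmat list" where
  "AN = [projop 3 (\<lambda>a. a = 0), projop 3 (\<lambda>a. a \<noteq> 0)]"
definition B4a :: "nat \<Rightarrow> cmat list" where
  "B4a \<rho> = [rowop 6 (wa1 \<rho>), rowop 6 (wa2 \<rho>), rowop 6 (wa3 \<rho>), rowop 6 (wa4 \<rho>), rowop 6 (wa5 \<rho>), rowop 6 (wa6 \<rho>)]"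
definition B4b :: "nat \<Rightarrow> cmat list" where
  "B4b \<rho> = [rowop 6 wb1, rowop 6 wb2, rowop 6 (wb3 \<rho>), rowop 6 (wb4 \<rho>), rowop 6 wb5, rowop 6 wb6]"
definition A5 :: "cmat list" where
  "A5 = [rowop 3 (ket_plus 1 2), rowop 3 (ket_minus 1 2), rowop 3 (ket 0)]"

lemma cnj_hh': "cnj (- hh) = - hh" by (simp add: cnj_hh)

lemma kraus_L2: "\<rho> < 2 \<Longrightarrow> kraus 6 6 (L2 \<rho>)"
  unfolding kraus_def L2_def
  apply (intro allI impI)
  apply (simp add: lessThan_Suc ctr_row ctr_proj)
  apply (drule in2r)
  apply (drule in6)+
  apply (elim disjE insertE emptyE)
  apply (simp_all add: v1_def v2_def e3_def PC_def kp km ket_def cnj_hh hh_sq)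
  done

lemma kraus_A3: "kraus 3 3 A3"
  unfolding kraus_def A3_def
  apply (intro allI impI)
  apply (simp add: lessThan_Suc ctr_row)
  apply (drule in3)+
  apply (elim insertE emptyE)
  apply (simp_all add: kp km ket_def cnj_hh hh_sq)
  done

lemma kraus_AN: "kraus 3 3 AN"
  unfolding kraus_def AN_def
  apply (intro allI impI)
  apply (simp add: lessThan_Suc ctr_proj)
  done

lemma kraus_B4a: "\<rho> < 2 \<Longrightarrow> kraus 6 6 (B4a \<rho>)"
  unfolding kraus_def B4a_def
  apply (intro allI impI)
  apply (simp add: lessThan_Suc ctr_row)
  apply (drule in2r)
  apply (drule in6)+
  apply (elim disjE insertE emptyE)
  apply (simp_all add: wa1_def wa2_def wa3_def wa4_def wa5_def wa6_def kp km ket_def cnj_hh hh_sq)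
  done

lemma kraus_B4b: "\<rho> < 2 \<Longrightarrow> kraus 6 6 (B4b \<rho>)"
  unfolding kraus_def B4b_def
  apply (intro allI impI)
  apply (simp add: lessThan_Suc ctr_row)
  apply (drule in2r)
  apply (drule in6)+
  apply (elim disjE insertE emptyE)
  apply (simp_all add: wb1_def wb2_def wb3_def wb4_def wb5_def wb6_def cnj_hh hh_sq)
  done

lemma kraus_A5: "kraus 3 3 A5"
  unfolding kraus_def A5_def
  apply (intro allI impI)
  apply (simp add: lessThan_Suc ctr_row)
  apply (drule in3)+
  apply (elim insertE emptyE)
  apply (simp_all add: kp km ket_def cnj_hh hh_sq)
  done


definition F1 :: "nat \<Rightarrow> nat \<Rightarrow> cmat" where "F1 \<rho> k = st1 \<rho> (xsf k) (ysf k)"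
definition G :: "nat \<Rightarrow> nat \<Rightarrow> cmat" where "G \<rho> k = bob_op 6 (projop 6 (PC \<rho>)) (F1 \<rho> k)"
definition H0 :: "nat \<Rightarrow> nat \<Rightarrow> cmat" where "H0 \<rho> k = alice_op 3 (projop 3 (\<lambda>a. a = 0)) (G \<rho> k)"
definition H1 :: "nat \<Rightarrow> nat \<Rightarrow> cmat" where "H1 \<rho> k = alice_op 3 (projop 3 (\<lambda>a. a \<noteq> 0)) (G \<rho> k)"
definition E :: "nat \<Rightarrow> nat \<Rightarrow> cmat" where "E \<rho> k = bob_op 6 (rowop 6 (e3 \<rho>)) (F1 \<rho> k)"

lemmas evd = ev F1_def G_def H0_def H1_def E_def v1_def v2_def e3_def PC_def
  wa1_def wa2_def wa3_def wa4_def wa5_def wa6_def wb1_def wb2_def wb3_def wb4_def wb5_def wb6_def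

lemma lf_v1: "\<rho> < 2 \<Longrightarrow> \<forall>k<9. k \<noteq> 4 \<longrightarrow> (\<forall>a<3. \<forall>b<6. bob_op 6 (rowop 6 (v1 \<rho>)) (F1 \<rho> k) a b = 0)"
  apply (intro allI impI)
  apply (simp only: F1_def G_def H0_def H1_def E_def bob_row bob_proj alice_row alice_proj sum6n sum3n)
  apply (drule in2r)
  apply (drule in9)
  apply (drule in3)
  apply (elim disjE insertE emptyE)
  apply (simp_all add: evd)
  done

lemma lf_v2: "\<rho> < 2 \<Longrightarrow> \<forall>k<9. k \<noteq> 5 \<longrightarrow> (\<forall>a<3. \<forall>b<6. bob_op 6 (rowop 6 (v2 \<rho>)) (F1 \<rho> k) a b = 0)"
  apply (intro allI impI)
  apply (simp only: F1_def G_def H0_def H1_def E_def bob_row bob_proj alice_row alice_proj sum6n sum3n)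
  apply (drule in2r)
  apply (drule in9)
  apply (drule in3)
  apply (elim disjE insertE emptyE)
  apply (simp_all add: evd)
  done

lemma lf_e_0: "\<rho> < 2 \<Longrightarrow> \<forall>k<9. k \<noteq> 2 \<longrightarrow> (\<forall>a<3. \<forall>b<6. alice_op 3 (rowop 3 (ket_plus 0 1)) (E \<rho> k) a b = 0)"
  apply (intro allI impI)
  apply (simp only: F1_def G_def H0_def H1_def E_def bob_row bob_proj alice_row alice_proj sum6n sum3n)
  apply (drule in2r)
  apply (drule in9)
  apply (drule in3)
  apply (elim disjE insertE emptyE)
  apply (simp_all add: evd)
  done

lemma lf_e_1: "\<rho> < 2 \<Longrightarrow> \<forall>k<9. k \<noteq> 3 \<longrightarrow> (\<forall>a<3. \<forall>b<6. alice_op 3 (rowop 3 (ket_minus 0 1)) (E \<rho> k) a b = 0)"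
  apply (intro allI impI)
  apply (simp only: F1_def G_def H0_def H1_def E_def bob_row bob_proj alice_row alice_proj sum6n sum3n)
  apply (drule in2r)
  apply (drule in9)
  apply (drule in3)
  apply (elim disjE insertE emptyE)
  apply (simp_all add: evd)
  done

lemma lf_e_2: "\<rho> < 2 \<Longrightarrow> \<forall>k<9. k \<noteq> 0 \<longrightarrow> (\<forall>a<3. \<forall>b<6. alice_op 3 (rowop 3 (ket 2)) (E \<rho> k) a b = 0)"
  apply (intro allI impI)
  apply (simp only: F1_def G_def H0_def H1_def E_def bob_row bob_proj alice_row alice_proj sum6n sum3n)
  apply (drule in2r)
  apply (drule in9)
  apply (drule in3)
  apply (elim disjE insertE emptyE)
  apply (simp_all add: evd)
  done

lemma lf_a_0: "\<rho> < 2 \<Longrightarrow> \<forall>k<9. k \<noteq> 0 \<longrightarrow> (\<forall>a<3. \<forall>b<6. bob_op 6 (rowop 6 (wa1 \<rho>)) (H0 \<rho> k) a b = 0)"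
  apply (intro allI impI)
  apply (simp only: F1_def G_def H0_def H1_def E_def bob_row bob_proj alice_row alice_proj sum6n sum3n)
  apply (drule in2r)
  apply (drule in9)
  apply (drule in3)
  apply (elim disjE insertE emptyE)
  apply (simp_all add: evd)
  done

lemma lf_a_1: "\<rho> < 2 \<Longrightarrow> \<forall>k<9. k \<noteq> 1 \<longrightarrow> (\<forall>a<3. \<forall>b<6. bob_op 6 (rowop 6 (wa2 \<rho>)) (H0 \<rho> k) a b = 0)"
  apply (intro allI impI)
  apply (simp only: F1_def G_def H0_def H1_def E_def bob_row bob_proj alice_row alice_proj sum6n sum3n)
  apply (drule in2r)
  apply (drule in9)
  apply (drule in3)
  apply (elim disjE insertE emptyE)
  apply (simp_all add: evd)
  done

lemma lf_a_2: "\<rho> < 2 \<Longrightarrow> \<forall>k<9. k \<noteq> 0 \<longrightarrow> (\<forall>a<3. \<forall>b<6. bob_op 6 (rowop 6 (wa3 \<rho>)) (H0 \<rho> k) a b = 0)"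
  apply (intro allI impI)
  apply (simp only: F1_def G_def H0_def H1_def E_def bob_row bob_proj alice_row alice_proj sum6n sum3n)
  apply (drule in2r)
  apply (drule in9)
  apply (drule in3)
  apply (elim disjE insertE emptyE)
  apply (simp_all add: evd)
  done

lemma lf_a_3: "\<rho> < 2 \<Longrightarrow> \<forall>k<9. k \<noteq> 0 \<longrightarrow> (\<forall>a<3. \<forall>b<6. bob_op 6 (rowop 6 (wa4 \<rho>)) (H0 \<rho> k) a b = 0)"
  apply (intro allI impI)
  apply (simp only: F1_def G_def H0_def H1_def E_def bob_row bob_proj alice_row alice_proj sum6n sum3n)
  apply (drule in2r)
  apply (drule in9)
  apply (drule in3)
  apply (elim disjE insertE emptyE)
  apply (simp_all add: evd)
  done

lemma lf_a_4: "\<rho> < 2 \<Longrightarrow> \<forall>k<9. k \<noteq> 0 \<longrightarrow> (\<forall>a<3. \<forall>b<6. bob_op 6 (rowop 6 (wa5 \<rho>)) (H0 \<rho> k) a b = 0)"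
  apply (intro allI impI)
  apply (simp only: F1_def G_def H0_def H1_def E_def bob_row bob_proj alice_row alice_proj sum6n sum3n)
  apply (drule in2r)
  apply (drule in9)
  apply (drule in3)
  apply (elim disjE insertE emptyE)
  apply (simp_all add: evd)
  done

lemma lf_a_5: "\<rho> < 2 \<Longrightarrow> \<forall>k<9. k \<noteq> 0 \<longrightarrow> (\<forall>a<3. \<forall>b<6. bob_op 6 (rowop 6 (wa6 \<rho>)) (H0 \<rho> k) a b = 0)"
  apply (intro allI impI)
  apply (simp only: F1_def G_def H0_def H1_def E_def bob_row bob_proj alice_row alice_proj sum6n sum3n)
  apply (drule in2r)
  apply (drule in9)
  apply (drule in3)
  apply (elim disjE insertE emptyE)
  apply (simp_all add: evd)
  done

lemma lf_b_2: "\<rho> < 2 \<Longrightarrow> \<forall>k<9. k \<noteq> 8 \<longrightarrow> (\<forall>a<3. \<forall>b<6. bob_op 6 (rowop 6 (wb3 \<rho>)) (H1 \<rho> k) a b = 0)"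
  apply (intro allI impI)
  apply (simp only: F1_def G_def H0_def H1_def E_def bob_row bob_proj alice_row alice_proj sum6n sum3n)
  apply (drule in2r)
  apply (drule in9)
  apply (drule in3)
  apply (elim disjE insertE emptyE)
  apply (simp_all add: evd)
  done

lemma lf_b_3: "\<rho> < 2 \<Longrightarrow> \<forall>k<9. k \<noteq> 0 \<longrightarrow> (\<forall>a<3. \<forall>b<6. bob_op 6 (rowop 6 (wb4 \<rho>)) (H1 \<rho> k) a b = 0)"
  apply (intro allI impI)
  apply (simp only: F1_def G_def H0_def H1_def E_def bob_row bob_proj alice_row alice_proj sum6n sum3n)
  apply (drule in2r)
  apply (drule in9)
  apply (drule in3)
  apply (elim disjE insertE emptyE)
  apply (simp_all add: evd)
  done

lemma lf_b_4: "\<rho> < 2 \<Longrightarrow> \<forall>k<9. k \<noteq> 0 \<longrightarrow> (\<forall>a<3. \<forall>b<6. bob_op 6 (rowop 6 (wb5)) (H1 \<rho> k) a b = 0)"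
  apply (intro allI impI)
  apply (simp only: F1_def G_def H0_def H1_def E_def bob_row bob_proj alice_row alice_proj sum6n sum3n)
  apply (drule in2r)
  apply (drule in9)
  apply (drule in3)
  apply (elim disjE insertE emptyE)
  apply (simp_all add: evd)
  done

lemma lf_b_5: "\<rho> < 2 \<Longrightarrow> \<forall>k<9. k \<noteq> 0 \<longrightarrow> (\<forall>a<3. \<forall>b<6. bob_op 6 (rowop 6 (wb6)) (H1 \<rho> k) a b = 0)"
  apply (intro allI impI)
  apply (simp only: F1_def G_def H0_def H1_def E_def bob_row bob_proj alice_row alice_proj sum6n sum3n)
  apply (drule in2r)
  apply (drule in9)
  apply (drule in3)
  apply (elim disjE insertE emptyE)
  apply (simp_all add: evd)
  done

lemma lf_c_0_0: "\<rho> < 2 \<Longrightarrow> \<forall>k<9. k \<noteq> 6 \<longrightarrow> (\<forall>a<3. \<forall>b<6. alice_op 3 (rowop 3 (ket_plus 1 2)) (bob_op 6 (rowop 6 wb1) (H1 \<rho> k)) a b = 0)"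
  apply (intro allI impI)
  apply (simp only: F1_def G_def H0_def H1_def E_def bob_row bob_proj alice_row alice_proj sum6n sum3n)
  apply (drule in2r)
  apply (drule in9)
  apply (drule in3)
  apply (elim disjE insertE emptyE)
  apply (simp_all add: evd)
  done

lemma lf_c_0_1: "\<rho> < 2 \<Longrightarrow> \<forall>k<9. k \<noteq> 7 \<longrightarrow> (\<forall>a<3. \<forall>b<6. alice_op 3 (rowop 3 (ket_minus 1 2)) (bob_op 6 (rowop 6 wb1) (H1 \<rho> k)) a b = 0)"
  apply (intro allI impI)
  apply (simp only: F1_def G_def H0_def H1_def E_def bob_row bob_proj alice_row alice_proj sum6n sum3n)
  apply (drule in2r)
  apply (drule in9)
  apply (drule in3)
  apply (elim disjE insertE emptyE)
  apply (simp_all add: evd)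
  done

lemma lf_c_0_2: "\<rho> < 2 \<Longrightarrow> \<forall>k<9. k \<noteq> 0 \<longrightarrow> (\<forall>a<3. \<forall>b<6. alice_op 3 (rowop 3 (ket 0)) (bob_op 6 (rowop 6 wb1) (H1 \<rho> k)) a b = 0)"
  apply (intro allI impI)
  apply (simp only: F1_def G_def H0_def H1_def E_def bob_row bob_proj alice_row alice_proj sum6n sum3n)
  apply (drule in2r)
  apply (drule in9)
  apply (drule in3)
  apply (elim disjE insertE emptyE)
  apply (simp_all add: evd)
  done

lemma lf_c_1_0: "\<rho> < 2 \<Longrightarrow> \<forall>k<9. k \<noteq> 7 \<longrightarrow> (\<forall>a<3. \<forall>b<6. alice_op 3 (rowop 3 (ket_plus 1 2)) (bob_op 6 (rowop 6 wb2) (H1 \<rho> k)) a b = 0)"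
  apply (intro allI impI)
  apply (simp only: F1_def G_def H0_def H1_def E_def bob_row bob_proj alice_row alice_proj sum6n sum3n)
  apply (drule in2r)
  apply (drule in9)
  apply (drule in3)
  apply (elim disjE insertE emptyE)
  apply (simp_all add: evd)
  done

lemma lf_c_1_1: "\<rho> < 2 \<Longrightarrow> \<forall>k<9. k \<noteq> 6 \<longrightarrow> (\<forall>a<3. \<forall>b<6. alice_op 3 (rowop 3 (ket_minus 1 2)) (bob_op 6 (rowop 6 wb2) (H1 \<rho> k)) a b = 0)"
  apply (intro allI impI)
  apply (simp only: F1_def G_def H0_def H1_def E_def bob_row bob_proj alice_row alice_proj sum6n sum3n)
  apply (drule in2r)
  apply (drule in9)
  apply (drule in3)
  apply (elim disjE insertE emptyE)
  apply (simp_all add: evd)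
  done

lemma lf_c_1_2: "\<rho> < 2 \<Longrightarrow> \<forall>k<9. k \<noteq> 0 \<longrightarrow> (\<forall>a<3. \<forall>b<6. alice_op 3 (rowop 3 (ket 0)) (bob_op 6 (rowop 6 wb2) (H1 \<rho> k)) a b = 0)"
  apply (intro allI impI)
  apply (simp only: F1_def G_def H0_def H1_def E_def bob_row bob_proj alice_row alice_proj sum6n sum3n)
  apply (drule in2r)
  apply (drule in9)
  apply (drule in3)
  apply (elim disjE insertE emptyE)
  apply (simp_all add: evd)
  done


lemma lt3c: "(m::nat) < 3 \<Longrightarrow> m = 0 \<or> m = 1 \<or> m = 2" by auto
lemma lt6c: "(m::nat) < 6 \<Longrightarrow> m = 0 \<or> m = 1 \<or> m = 2 \<or> m = 3 \<or> m = 4 \<or> m = 5" by auto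
lemma lt4c: "(m::nat) < 4 \<Longrightarrow> m = 0 \<or> m = 1 \<or> m = 2 \<or> m = 3" by auto
lemma lt2c: "(m::nat) < 2 \<Longrightarrow> m = 0 \<or> m = 1" by auto

lemma leafmap: "(\<forall>k<9. k \<noteq> k0 \<longrightarrow> (\<forall>a<dA. \<forall>b<dB. opr (F k) a b = 0)) \<Longrightarrow> locc_dist n dA dB (map opr (map F [0..<9]))"
proof -
  assume h: "\<forall>k<9. k \<noteq> k0 \<longrightarrow> (\<forall>a<dA. \<forall>b<dB. opr (F k) a b = 0)"
  have eq: "map opr (map F [0..<9]) = map (\<lambda>k. opr (F k)) [0..<9]" by simp
  show ?thesis unfolding eq by (rule leaf_locc[OF h])
qed

lemma t_c0: assumes r: "\<rho> < 2"
  shows "locc_dist (Suc (0)) 3 6 (map (\<lambda>k. bob_op 6 (rowop 6 wb1) (H1 \<rho> k)) [0..<9])"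
proof (rule locc_alice[OF kraus_A5], intro allI impI)
  fix m assume "m < length (A5)"
  hence "m < 3" by (simp add: A5_def)
  hence mc: "m = 0 \<or> m = 1 \<or> m = 2" by (rule lt3c)
  have c0: "locc_dist (0) 3 6 (map (alice_op 3 (A5 ! 0)) (map (\<lambda>k. bob_op 6 (rowop 6 wb1) (H1 \<rho> k)) [0..<9]))"
  proof -
    have e: "A5 ! 0 = rowop 3 (ket_plus 1 2)" by (simp add: A5_def)
    show ?thesis unfolding e by (rule leafmap[where opr = "alice_op 3 (rowop 3 (ket_plus 1 2))"], rule lf_c_0_0[OF r])
  qed
  have c1: "locc_dist (0) 3 6 (map (alice_op 3 (A5 ! 1)) (map (\<lambda>k. bob_op 6 (rowop 6 wb1) (H1 \<rho> k)) [0..<9]))"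
  proof -
    have e: "A5 ! 1 = rowop 3 (ket_minus 1 2)" by (simp add: A5_def)
    show ?thesis unfolding e by (rule leafmap[where opr = "alice_op 3 (rowop 3 (ket_minus 1 2))"], rule lf_c_0_1[OF r])
  qed
  have c2: "locc_dist (0) 3 6 (map (alice_op 3 (A5 ! 2)) (map (\<lambda>k. bob_op 6 (rowop 6 wb1) (H1 \<rho> k)) [0..<9]))"
  proof -
    have e: "A5 ! 2 = rowop 3 (ket 0)" by (simp add: A5_def)
    show ?thesis unfolding e by (rule leafmap[where opr = "alice_op 3 (rowop 3 (ket 0))"], rule lf_c_0_2[OF r])
  qed
  show "locc_dist (0) 3 6 (map (alice_op 3 (A5 ! m)) (map (\<lambda>k. bob_op 6 (rowop 6 wb1) (H1 \<rho> k)) [0..<9]))"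
    using mc c0 c1 c2 by metis
qed

lemma t_c1: assumes r: "\<rho> < 2"
  shows "locc_dist (Suc (0)) 3 6 (map (\<lambda>k. bob_op 6 (rowop 6 wb2) (H1 \<rho> k)) [0..<9])"
proof (rule locc_alice[OF kraus_A5], intro allI impI)
  fix m assume "m < length (A5)"
  hence "m < 3" by (simp add: A5_def)
  hence mc: "m = 0 \<or> m = 1 \<or> m = 2" by (rule lt3c)
  have c0: "locc_dist (0) 3 6 (map (alice_op 3 (A5 ! 0)) (map (\<lambda>k. bob_op 6 (rowop 6 wb2) (H1 \<rho> k)) [0..<9]))"
  proof -
    have e: "A5 ! 0 = rowop 3 (ket_plus 1 2)" by (simp add: A5_def)
    show ?thesis unfolding e by (rule leafmap[where opr = "alice_op 3 (rowop 3 (ket_plus 1 2))"], rule lf_c_1_0[OF r])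
  qed
  have c1: "locc_dist (0) 3 6 (map (alice_op 3 (A5 ! 1)) (map (\<lambda>k. bob_op 6 (rowop 6 wb2) (H1 \<rho> k)) [0..<9]))"
  proof -
    have e: "A5 ! 1 = rowop 3 (ket_minus 1 2)" by (simp add: A5_def)
    show ?thesis unfolding e by (rule leafmap[where opr = "alice_op 3 (rowop 3 (ket_minus 1 2))"], rule lf_c_1_1[OF r])
  qed
  have c2: "locc_dist (0) 3 6 (map (alice_op 3 (A5 ! 2)) (map (\<lambda>k. bob_op 6 (rowop 6 wb2) (H1 \<rho> k)) [0..<9]))"
  proof -
    have e: "A5 ! 2 = rowop 3 (ket 0)" by (simp add: A5_def)
    show ?thesis unfolding e by (rule leafmap[where opr = "alice_op 3 (rowop 3 (ket 0))"], rule lf_c_1_2[OF r])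
  qed
  show "locc_dist (0) 3 6 (map (alice_op 3 (A5 ! m)) (map (\<lambda>k. bob_op 6 (rowop 6 wb2) (H1 \<rho> k)) [0..<9]))"
    using mc c0 c1 c2 by metis
qed

lemma t_H1: assumes r: "\<rho> < 2"
  shows "locc_dist (Suc (Suc 0)) 3 6 (map (H1 \<rho>) [0..<9])"
proof (rule locc_bob[OF kraus_B4b[OF r]], intro allI impI)
  fix m assume "m < length (B4b \<rho>)"
  hence "m < 6" by (simp add: B4b_def)
  hence mc: "m = 0 \<or> m = 1 \<or> m = 2 \<or> m = 3 \<or> m = 4 \<or> m = 5" by (rule lt6c)
  have c0: "locc_dist (Suc 0) 3 6 (map (bob_op 6 (B4b \<rho> ! 0)) (map (H1 \<rho>) [0..<9]))"
  proof -
    have e: "B4b \<rho> ! 0 = rowop 6 wb1" by (simp add: B4b_def)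
    have eq: "map (bob_op 6 (rowop 6 wb1)) (map (H1 \<rho>) [0..<9]) = map (\<lambda>k. bob_op 6 (rowop 6 wb1) (H1 \<rho> k)) [0..<9]" by simp
    show ?thesis unfolding e eq by (rule t_c0[OF r])
  qed
  have c1: "locc_dist (Suc 0) 3 6 (map (bob_op 6 (B4b \<rho> ! 1)) (map (H1 \<rho>) [0..<9]))"
  proof -
    have e: "B4b \<rho> ! 1 = rowop 6 wb2" by (simp add: B4b_def)
    have eq: "map (bob_op 6 (rowop 6 wb2)) (map (H1 \<rho>) [0..<9]) = map (\<lambda>k. bob_op 6 (rowop 6 wb2) (H1 \<rho> k)) [0..<9]" by simp
    show ?thesis unfolding e eq by (rule t_c1[OF r])
  qed
  have c2: "locc_dist (Suc 0) 3 6 (map (bob_op 6 (B4b \<rho> ! 2)) (map (H1 \<rho>) [0..<9]))"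
  proof -
    have e: "B4b \<rho> ! 2 = rowop 6 (wb3 \<rho>)" by (simp add: B4b_def)
    show ?thesis unfolding e by (rule leafmap[where opr = "bob_op 6 (rowop 6 (wb3 \<rho>))"], rule lf_b_2[OF r])
  qed
  have c3: "locc_dist (Suc 0) 3 6 (map (bob_op 6 (B4b \<rho> ! 3)) (map (H1 \<rho>) [0..<9]))"
  proof -
    have e: "B4b \<rho> ! 3 = rowop 6 (wb4 \<rho>)" by (simp add: B4b_def)
    show ?thesis unfolding e by (rule leafmap[where opr = "bob_op 6 (rowop 6 (wb4 \<rho>))"], rule lf_b_3[OF r])
  qed
  have c4: "locc_dist (Suc 0) 3 6 (map (bob_op 6 (B4b \<rho> ! 4)) (map (H1 \<rho>) [0..<9]))"
  proof -
    have e: "B4b \<rho> ! 4 = rowop 6 wb5" by (simp add: B4b_def)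
    show ?thesis unfolding e by (rule leafmap[where opr = "bob_op 6 (rowop 6 wb5)"], rule lf_b_4[OF r])
  qed
  have c5: "locc_dist (Suc 0) 3 6 (map (bob_op 6 (B4b \<rho> ! 5)) (map (H1 \<rho>) [0..<9]))"
  proof -
    have e: "B4b \<rho> ! 5 = rowop 6 wb6" by (simp add: B4b_def)
    show ?thesis unfolding e by (rule leafmap[where opr = "bob_op 6 (rowop 6 wb6)"], rule lf_b_5[OF r])
  qed
  show "locc_dist (Suc 0) 3 6 (map (bob_op 6 (B4b \<rho> ! m)) (map (H1 \<rho>) [0..<9]))"
    using mc c0 c1 c2 c3 c4 c5 by metis
qed

lemma t_H0: assumes r: "\<rho> < 2"
  shows "locc_dist (Suc (Suc 0)) 3 6 (map (H0 \<rho>) [0..<9])"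
proof (rule locc_bob[OF kraus_B4a[OF r]], intro allI impI)
  fix m assume "m < length (B4a \<rho>)"
  hence "m < 6" by (simp add: B4a_def)
  hence mc: "m = 0 \<or> m = 1 \<or> m = 2 \<or> m = 3 \<or> m = 4 \<or> m = 5" by (rule lt6c)
  have c0: "locc_dist (Suc 0) 3 6 (map (bob_op 6 (B4a \<rho> ! 0)) (map (H0 \<rho>) [0..<9]))"
  proof -
    have e: "B4a \<rho> ! 0 = rowop 6 (wa1 \<rho>)" by (simp add: B4a_def)
    show ?thesis unfolding e by (rule leafmap[where opr = "bob_op 6 (rowop 6 (wa1 \<rho>))"], rule lf_a_0[OF r])
  qed
  have c1: "locc_dist (Suc 0) 3 6 (map (bob_op 6 (B4a \<rho> ! 1)) (map (H0 \<rho>) [0..<9]))"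
  proof -
    have e: "B4a \<rho> ! 1 = rowop 6 (wa2 \<rho>)" by (simp add: B4a_def)
    show ?thesis unfolding e by (rule leafmap[where opr = "bob_op 6 (rowop 6 (wa2 \<rho>))"], rule lf_a_1[OF r])
  qed
  have c2: "locc_dist (Suc 0) 3 6 (map (bob_op 6 (B4a \<rho> ! 2)) (map (H0 \<rho>) [0..<9]))"
  proof -
    have e: "B4a \<rho> ! 2 = rowop 6 (wa3 \<rho>)" by (simp add: B4a_def)
    show ?thesis unfolding e by (rule leafmap[where opr = "bob_op 6 (rowop 6 (wa3 \<rho>))"], rule lf_a_2[OF r])
  qed
  have c3: "locc_dist (Suc 0) 3 6 (map (bob_op 6 (B4a \<rho> ! 3)) (map (H0 \<rho>) [0..<9]))"
  proof -
    have e: "B4a \<rho> ! 3 = rowop 6 (wa4 \<rho>)" by (simp add: B4a_def)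
    show ?thesis unfolding e by (rule leafmap[where opr = "bob_op 6 (rowop 6 (wa4 \<rho>))"], rule lf_a_3[OF r])
  qed
  have c4: "locc_dist (Suc 0) 3 6 (map (bob_op 6 (B4a \<rho> ! 4)) (map (H0 \<rho>) [0..<9]))"
  proof -
    have e: "B4a \<rho> ! 4 = rowop 6 (wa5 \<rho>)" by (simp add: B4a_def)
    show ?thesis unfolding e by (rule leafmap[where opr = "bob_op 6 (rowop 6 (wa5 \<rho>))"], rule lf_a_4[OF r])
  qed
  have c5: "locc_dist (Suc 0) 3 6 (map (bob_op 6 (B4a \<rho> ! 5)) (map (H0 \<rho>) [0..<9]))"
  proof -
    have e: "B4a \<rho> ! 5 = rowop 6 (wa6 \<rho>)" by (simp add: B4a_def)
    show ?thesis unfolding e by (rule leafmap[where opr = "bob_op 6 (rowop 6 (wa6 \<rho>))"], rule lf_a_5[OF r])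
  qed
  show "locc_dist (Suc 0) 3 6 (map (bob_op 6 (B4a \<rho> ! m)) (map (H0 \<rho>) [0..<9]))"
    using mc c0 c1 c2 c3 c4 c5 by metis
qed

lemma t_G: assumes r: "\<rho> < 2"
  shows "locc_dist (Suc (Suc (Suc 0))) 3 6 (map (G \<rho>) [0..<9])"
proof (rule locc_alice[OF kraus_AN], intro allI impI)
  fix m assume "m < length (AN)"
  hence "m < 2" by (simp add: AN_def)
  hence mc: "m = 0 \<or> m = 1" by (rule lt2c)
  have c0: "locc_dist (Suc (Suc 0)) 3 6 (map (alice_op 3 (AN ! 0)) (map (G \<rho>) [0..<9]))"
  proof -
    have "map (alice_op 3 (AN ! 0)) (map (G \<rho>) [0..<9]) = map (H0 \<rho>) [0..<9]" by (simp add: AN_def H0_def)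
    thus ?thesis by (simp only:) (rule t_H0[OF r])
  qed
  have c1: "locc_dist (Suc (Suc 0)) 3 6 (map (alice_op 3 (AN ! 1)) (map (G \<rho>) [0..<9]))"
  proof -
    have "map (alice_op 3 (AN ! 1)) (map (G \<rho>) [0..<9]) = map (H1 \<rho>) [0..<9]" by (simp add: AN_def H1_def)
    thus ?thesis by (simp only:) (rule t_H1[OF r])
  qed
  show "locc_dist (Suc (Suc 0)) 3 6 (map (alice_op 3 (AN ! m)) (map (G \<rho>) [0..<9]))"
    using mc c0 c1 by metis
qed

lemma t_E: assumes r: "\<rho> < 2"
  shows "locc_dist (Suc (Suc (Suc 0))) 3 6 (map (E \<rho>) [0..<9])"
proof (rule locc_alice[OF kraus_A3], intro allI impI)
  fix m assume "m < length (A3)"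
  hence "m < 3" by (simp add: A3_def)
  hence mc: "m = 0 \<or> m = 1 \<or> m = 2" by (rule lt3c)
  have c0: "locc_dist (Suc (Suc 0)) 3 6 (map (alice_op 3 (A3 ! 0)) (map (E \<rho>) [0..<9]))"
  proof -
    have e: "A3 ! 0 = rowop 3 (ket_plus 0 1)" by (simp add: A3_def)
    show ?thesis unfolding e by (rule leafmap[where opr = "alice_op 3 (rowop 3 (ket_plus 0 1))"], rule lf_e_0[OF r])
  qed
  have c1: "locc_dist (Suc (Suc 0)) 3 6 (map (alice_op 3 (A3 ! 1)) (map (E \<rho>) [0..<9]))"
  proof -
    have e: "A3 ! 1 = rowop 3 (ket_minus 0 1)" by (simp add: A3_def)
    show ?thesis unfolding e by (rule leafmap[where opr = "alice_op 3 (rowop 3 (ket_minus 0 1))"], rule lf_e_1[OF r])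
  qed
  have c2: "locc_dist (Suc (Suc 0)) 3 6 (map (alice_op 3 (A3 ! 2)) (map (E \<rho>) [0..<9]))"
  proof -
    have e: "A3 ! 2 = rowop 3 (ket 2)" by (simp add: A3_def)
    show ?thesis unfolding e by (rule leafmap[where opr = "alice_op 3 (rowop 3 (ket 2))"], rule lf_e_2[OF r])
  qed
  show "locc_dist (Suc (Suc 0)) 3 6 (map (alice_op 3 (A3 ! m)) (map (E \<rho>) [0..<9]))"
    using mc c0 c1 c2 by metis
qed

lemma t_F1: assumes r: "\<rho> < 2"
  shows "locc_dist (Suc (Suc (Suc (Suc 0)))) 3 6 (map (F1 \<rho>) [0..<9])"
proof (rule locc_bob[OF kraus_L2[OF r]], intro allI impI)
  fix m assume "m < length (L2 \<rho>)"
  hence "m < 4" by (simp add: L2_def)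
  hence mc: "m = 0 \<or> m = 1 \<or> m = 2 \<or> m = 3" by (rule lt4c)
  have c0: "locc_dist (Suc (Suc (Suc 0))) 3 6 (map (bob_op 6 (L2 \<rho> ! 0)) (map (F1 \<rho>) [0..<9]))"
  proof -
    have e: "L2 \<rho> ! 0 = rowop 6 (v1 \<rho>)" by (simp add: L2_def)
    show ?thesis unfolding e by (rule leafmap[where opr = "bob_op 6 (rowop 6 (v1 \<rho>))"], rule lf_v1[OF r])
  qed
  have c1: "locc_dist (Suc (Suc (Suc 0))) 3 6 (map (bob_op 6 (L2 \<rho> ! 1)) (map (F1 \<rho>) [0..<9]))"
  proof -
    have e: "L2 \<rho> ! 1 = rowop 6 (v2 \<rho>)" by (simp add: L2_def)
    show ?thesis unfolding e by (rule leafmap[where opr = "bob_op 6 (rowop 6 (v2 \<rho>))"], rule lf_v2[OF r])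
  qed
  have c2: "locc_dist (Suc (Suc (Suc 0))) 3 6 (map (bob_op 6 (L2 \<rho> ! 2)) (map (F1 \<rho>) [0..<9]))"
  proof -
    have "map (bob_op 6 (L2 \<rho> ! 2)) (map (F1 \<rho>) [0..<9]) = map (E \<rho>) [0..<9]" by (simp add: L2_def E_def)
    thus ?thesis by (simp only:) (rule t_E[OF r])
  qed
  have c3: "locc_dist (Suc (Suc (Suc 0))) 3 6 (map (bob_op 6 (L2 \<rho> ! 3)) (map (F1 \<rho>) [0..<9]))"
  proof -
    have "map (bob_op 6 (L2 \<rho> ! 3)) (map (F1 \<rho>) [0..<9]) = map (G \<rho>) [0..<9]" by (simp add: L2_def G_def)
    thus ?thesis by (simp only:) (rule t_G[OF r])
  qed
  show "locc_dist (Suc (Suc (Suc 0))) 3 6 (map (bob_op 6 (L2 \<rho> ! m)) (map (F1 \<rho>) [0..<9]))"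
    using mc c0 c1 c2 c3 by metis
qed

lemma twoway_c: "two_way_locc_dist (3 * 2) (3 * 2) (nine_with 2 2 Phi2)"
proof -
  have "locc_dist (Suc (Suc (Suc (Suc (Suc 0))))) 6 6 (nine_with 2 2 Phi2)"
  proof (rule locc_alice[OF kraus_RA], intro allI impI)
    fix m assume "m < length [RA 0, RA 1]"
    hence m: "m < 2" by simp
    have "map (alice_op 6 ([RA 0, RA 1] ! m)) (nine_with 2 2 Phi2) = map (F1 m) [0..<9]"
    proof -
      have "[RA 0, RA 1] ! m = RA m" using m by (cases m) (auto simp: less_Suc_eq)
      thus ?thesis using stage1_list[OF m] by (simp add: F1_def)
    qed
    thus "locc_dist (Suc (Suc (Suc (Suc 0)))) 3 6 (map (alice_op 6 ([RA 0, RA 1] ! m)) (nine_with 2 2 Phi2))"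
      by (simp only:) (rule t_F1[OF m])
  qed
  thus ?thesis unfolding two_way_locc_dist_def by (intro exI[of _ "Suc (Suc (Suc (Suc (Suc 0))))"]) simp
qed


theorem mainTheorem12:
  shows
   "(\<forall>dA' dB' Phi. dA' > 0 \<and> dB' > 0 \<and> unit_state dA' dB' Phi \<and>
        one_way_locc_dist (3 * dA') (3 * dB') (nine_with dA' dB' Phi)
        \<longrightarrow> schmidt_rank dA' dB' Phi \<ge> 3)
    \<and> (\<exists>dA' dB' Phi. dA' > 0 \<and> dB' > 0 \<and> unit_state dA' dB' Phi \<and>
        schmidt_rank dA' dB' Phi = 3 \<and>
        one_way_locc_dist (3 * dA') (3 * dB') (nine_with dA' dB' Phi))
    \<and> (\<exists>dA' dB' Phi. dA' > 0 \<and> dB' > 0 \<and> unit_state dA' dB' Phi \<and>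
        schmidt_rank dA' dB' Phi = 2 \<and>
        two_way_locc_dist (3 * dA') (3 * dB') (nine_with dA' dB' Phi))"
proof (intro conjI)
  show "\<forall>dA' dB' Phi. dA' > 0 \<and> dB' > 0 \<and> unit_state dA' dB' Phi \<and>
        one_way_locc_dist (3 * dA') (3 * dB') (nine_with dA' dB' Phi)
        \<longrightarrow> schmidt_rank dA' dB' Phi \<ge> 3"
    using partA by blast
  show "\<exists>dA' dB' Phi. dA' > 0 \<and> dB' > 0 \<and> unit_state dA' dB' Phi \<and>
        schmidt_rank dA' dB' Phi = 3 \<and>
        one_way_locc_dist (3 * dA') (3 * dB') (nine_with dA' dB' Phi)"
    using unit3 rank3 oneway_b by (intro exI[of _ "3::nat"] exI[of _ Phi3]) simp
  show "\<exists>dA' dB' Phi. dA' > 0 \<and> dB' > 0 \<and> unit_state dA' dB' Phi \<and>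
        schmidt_rank dA' dB' Phi = 2 \<and>
        two_way_locc_dist (3 * dA') (3 * dB') (nine_with dA' dB' Phi)"
    using unit2 rank2 twoway_c by (intro exI[of _ "2::nat"] exI[of _ Phi2]) simp
qed

end
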